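(* Let $d\ge2$ and let $f:\mathbb{R}^d\to\mathbb{R}$ be bounded, Borel-measurable, with $\mathrm{supp}(f)\subset[0,1]^d$. Then for every $r>0$ and $y\in\mathbb{R}^d$, \[U(y)=\max_{x\in\partial B_r(y),\ x\le y}\{U(x)+w(x,y)\}.\]
   Context: For $x,y\in\mathbb{R}^d$, $x\leqq y$ means $x_i\le y_i$ for all $i$, and $x\le y$ means $x\leqq y$ and $x\ne y$. $B_r(y)=\{x:|x-y|<r\}$. Let $\mathcal{A}$ be the set of $\gamma\in C^1([0,1];\mathbb{R}^d)$ such that for every $t$, all components of $\gamma'(t)$ are nonnegative and $\gamma'(t)\ne0$. For $\gamma\in\mathcal{A}$, $J(\gamma)=\int_0^1 f(\gamma(t))^{1/d}(\gamma_1'(t)\cdots\gamma_d'(t))^{1/d}\,dt$, and $U(x)=\sup\{J(\gamma):\gamma\in\mathcal{A},\ \gamma(1)\leqq x\}$. For a curve $\gamma$ and a point $x$, write $x\leqq\gamma\leqq y$ if $x\leqq\gamma(t)\leqq y$ for all $t\in[0,1]$. Define $w(x,y)=\sup\{J(\gamma):\gamma\in\mathcal{A},\ x\leqq\gamma\leqq y\}$ if $x\leqq y$, and $w(x,y)=0$ otherwise. *)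

theory Defs
  imports "HOL-Analysis.Analysis"
begin

definition cle :: "real^'n \<Rightarrow> real^'n \<Rightarrow> bool" where
  "cle x y \<longleftrightarrow> (\<forall>i. x $ i \<le> y $ i)"

definition dcurve :: "(real \<Rightarrow> real^'n) \<Rightarrow> real \<Rightarrow> real^'n" where
  "dcurve \<gamma> t = vector_derivative \<gamma> (at t within {0..1})"

definition admissible :: "(real \<Rightarrow> real^'n) \<Rightarrow> bool" where
  "admissible \<gamma> \<longleftrightarrow>
     (\<exists>\<gamma>'. (\<forall>t\<in>{0..1}. (\<gamma> has_vector_derivative \<gamma>' t) (at t within {0..1}))
          \<and> continuous_on {0..1} \<gamma>')
   \<and> (\<forall>t\<in>{0..1}. (\<forall>i. 0 \<le> dcurve \<gamma> t $ i) \<and> dcurve \<gamma> t \<noteq> 0)"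

definition Jfun :: "(real^'n \<Rightarrow> real) \<Rightarrow> (real \<Rightarrow> real^'n) \<Rightarrow> real" where
  "Jfun f \<gamma> = integral {0..1}
     (\<lambda>t. f (\<gamma> t) powr (1 / real CARD('n)) *
          (\<Prod>i\<in>UNIV. dcurve \<gamma> t $ i) powr (1 / real CARD('n)))"

definition Ufun :: "(real^'n \<Rightarrow> real) \<Rightarrow> real^'n \<Rightarrow> real" where
  "Ufun f x = Sup {Jfun f \<gamma> | \<gamma>. admissible \<gamma> \<and> cle (\<gamma> 1) x}"

definition wfun :: "(real^'n \<Rightarrow> real) \<Rightarrow> real^'n \<Rightarrow> real^'n \<Rightarrow> real" where
  "wfun f x y = (if cle x y then
      Sup {Jfun f \<gamma> | \<gamma>. admissible \<gamma> \<and> (\<forall>t\<in>{0..1}. cle x (\<gamma> t) \<and> cle (\<gamma> t) y)}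
    else 0)"

end

theory Submission
  imports Defs
begin

definition C1on :: "real \<Rightarrow> real \<Rightarrow> (real \<Rightarrow> real^'n) \<Rightarrow> (real \<Rightarrow> real^'n) \<Rightarrow> bool" where
  "C1on a b \<gamma> g \<longleftrightarrow> a < b \<and> (\<forall>t\<in>{a..b}. (\<gamma> has_vector_derivative g t) (at t within {a..b}))
     \<and> continuous_on {a..b} g \<and> (\<forall>t\<in>{a..b}. (\<forall>i. 0 \<le> g t $ i) \<and> g t \<noteq> 0)"

definition Gd :: "real^'n \<Rightarrow> real" where
  "Gd v = (\<Prod>i\<in>UNIV. v $ i) powr (1 / real CARD('n))"

definition JJ :: "(real^'n \<Rightarrow> real) \<Rightarrow> (real \<Rightarrow> real^'n) \<Rightarrow> (real \<Rightarrow> real^'n) \<Rightarrow> real \<Rightarrow> real \<Rightarrow> real" where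
  "JJ f \<gamma> g a b = integral {a..b} (\<lambda>t. f (\<gamma> t) powr (1 / real CARD('n)) * Gd (g t))"

lemma C1on_admissible:
  fixes \<gamma> :: "real \<Rightarrow> real^'n"
  shows "C1on 0 1 \<gamma> g \<Longrightarrow> admissible \<gamma> \<and> Jfun f \<gamma> = JJ f \<gamma> g 0 1"
proof -
  assume c: "C1on 0 1 \<gamma> g"
  have dc: "dcurve \<gamma> t = g t" if "t \<in> {0..1}" for t
    using c that unfolding C1on_def dcurve_def
    by (intro vector_derivative_within_closed_interval) auto
  show ?thesis
    unfolding admissible_def Jfun_def JJ_def
  proof (intro conjI)
    show "\<exists>\<gamma>'. (\<forall>t\<in>{0..1}. (\<gamma> has_vector_derivative \<gamma>' t) (at t within {0..1})) \<and> continuous_on {0..1} \<gamma>'"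
      using c unfolding C1on_def by blast
    show "\<forall>t\<in>{0..1}. (\<forall>i. 0 \<le> dcurve \<gamma> t $ i) \<and> dcurve \<gamma> t \<noteq> 0"
      using c dc unfolding C1on_def by auto
    show "integral {0..1} (\<lambda>t. f (\<gamma> t) powr (1 / real CARD('n)) * (\<Prod>i\<in>UNIV. dcurve \<gamma> t $ i) powr (1 / real CARD('n)))
        = integral {0..1} (\<lambda>t. f (\<gamma> t) powr (1 / real CARD('n)) * Gd (g t))"
      by (rule integral_cong) (simp add: dc Gd_def)
  qed
qed

lemma admissible_C1on: "admissible \<gamma> \<Longrightarrow> \<exists>g. C1on 0 1 \<gamma> g"
proof -
  assume a: "admissible \<gamma>"
  then obtain g where g: "\<forall>t\<in>{0..1}. (\<gamma> has_vector_derivative g t) (at t within {0..1})"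
    "continuous_on {0..1} g" unfolding admissible_def by blast
  have dc: "dcurve \<gamma> t = g t" if "t \<in> {0..1}" for t
    using g that unfolding dcurve_def
    by (intro vector_derivative_within_closed_interval) auto
  show ?thesis using a g dc unfolding C1on_def admissible_def by (intro exI[of _ g]) auto
qed

lemma Gd_scale:
  assumes "m > 0" "\<forall>i. 0 \<le> v $ i"
  shows "Gd (m *\<^sub>R v) = m * Gd (v::real^'n)"
proof -
  have "(\<Prod>i\<in>UNIV. (m *\<^sub>R v) $ i) = m ^ CARD('n) * (\<Prod>i\<in>UNIV. v $ i)"
    by (simp add: prod.distrib)
  moreover have "(m ^ CARD('n)) powr (1 / real CARD('n)) = m"
    using assms(1) by (simp add: powr_realpow[symmetric] powr_powr)
  moreover have "0 \<le> (\<Prod>i\<in>UNIV. v $ i)" using assms(2) by (simp add: prod_nonneg)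
  ultimately show ?thesis unfolding Gd_def using assms(1) by (simp add: powr_mult)
qed

lemma C1on_reparam:
  fixes \<gamma> :: "real \<Rightarrow> real^'n"
  assumes c: "C1on a b \<gamma> g" and m: "m > 0"
  shows "C1on ((a - k) / m) ((b - k) / m) (\<lambda>s. \<gamma> (m * s + k)) (\<lambda>s. m *\<^sub>R g (m * s + k))
     \<and> JJ f (\<lambda>s. \<gamma> (m * s + k)) (\<lambda>s. m *\<^sub>R g (m * s + k)) ((a - k) / m) ((b - k) / m) = JJ f \<gamma> g a b"
proof -
  let ?a = "(a - k) / m" and ?b = "(b - k) / m"
  have img: "(\<lambda>s. m * s + k) ` {?a..?b} = {a..b}"
  proof -
    have "(\<lambda>s. m * s + k) ` {?a..?b} = (\<lambda>s. s + k) ` ((\<lambda>s. m * s) ` {?a..?b})"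
      by (simp add: image_image)
    also have "(\<lambda>s. m * s) ` {?a..?b} = {m * ?a .. m * ?b}"
      using m by (simp add: image_mult_atLeastAtMost)
    also have "(\<lambda>s. s + k) ` {m * ?a .. m * ?b} = {m * ?a + k .. m * ?b + k}"
      by (simp add: image_add_atLeastAtMost')
    finally show ?thesis using m by simp
  qed
  have mem: "m * s + k \<in> {a..b}" if "s \<in> {?a..?b}" for s
    using img that by blast
  have ab: "?a < ?b" using c m unfolding C1on_def by (simp add: divide_strict_right_mono)
  have der: "((\<lambda>s. \<gamma> (m * s + k)) has_vector_derivative m *\<^sub>R g (m * s + k)) (at s within {?a..?b})"
    if s: "s \<in> {?a..?b}" for s
  proof -
    have "((\<lambda>s. m * s + k) has_vector_derivative m) (at s within {?a..?b})"
      by (auto intro!: derivative_eq_intros simp: has_real_derivative_iff_has_vector_derivative[symmetric])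
    moreover have "(\<gamma> has_vector_derivative g (m * s + k)) (at (m * s + k) within (\<lambda>s. m * s + k) ` {?a..?b})"
      using c mem[OF s] unfolding img C1on_def by auto
    ultimately show ?thesis using vector_diff_chain_within[of "\<lambda>s. m * s + k"] by (simp add: o_def)
  qed
  have cont: "continuous_on {?a..?b} (\<lambda>s. m *\<^sub>R g (m * s + k))"
  proof -
    have "continuous_on {?a..?b} (\<lambda>s. m * s + k)" by (intro continuous_intros)
    moreover have "continuous_on ((\<lambda>s. m * s + k) ` {?a..?b}) g" using c img unfolding C1on_def by simp
    ultimately have "continuous_on {?a..?b} (g \<circ> (\<lambda>s. m * s + k))" by (rule continuous_on_compose)
    then show ?thesis by (intro continuous_intros) (simp add: o_def)
  qed
  have pos: "(\<forall>i. 0 \<le> (m *\<^sub>R g (m * s + k)) $ i) \<and> m *\<^sub>R g (m * s + k) \<noteq> 0" if "s \<in> {?a..?b}" for s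
    using c mem[OF that] m unfolding C1on_def by auto
  have C: "C1on ?a ?b (\<lambda>s. \<gamma> (m * s + k)) (\<lambda>s. m *\<^sub>R g (m * s + k))"
    unfolding C1on_def using ab der cont pos by blast
  define F where "F t = f (\<gamma> t) powr (1 / real CARD('n)) * Gd (g t)" for t
  have eq: "f (\<gamma> (m * s + k)) powr (1 / real CARD('n)) * Gd (m *\<^sub>R g (m * s + k)) = m * F (m * s + k)"
    if "s \<in> {?a..?b}" for s
    using c mem[OF that] m unfolding C1on_def F_def by (simp add: Gd_scale)
  have "JJ f (\<lambda>s. \<gamma> (m * s + k)) (\<lambda>s. m *\<^sub>R g (m * s + k)) ?a ?b = integral {?a..?b} (\<lambda>s. m * F (m * s + k))"
    unfolding JJ_def by (rule integral_cong) (rule eq)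
  also have "\<dots> = m * integral {?a..?b} (\<lambda>s. F (m * s + k))" by simp
  also have "integral {?a..?b} (\<lambda>s. F (m * s + k)) = integral {a..b} F / m"
  proof (cases "F integrable_on {a..b}")
    case True
    then have "(F has_integral integral {a..b} F) (cbox a b)" by (simp add: integrable_integral)
    from has_integral_affinity'[OF this m, of k]
    have "((\<lambda>x. F (m * x + k)) has_integral inverse m * integral {a..b} F) {inverse m * (a - k)..inverse m * (b - k)}" by simp
    moreover have "inverse m * integral {a..b} F = integral {a..b} F / m" "inverse m * (a - k) = ?a" "inverse m * (b - k) = ?b"
      by (simp_all add: divide_inverse)
    ultimately have "((\<lambda>x. F (m * x + k)) has_integral integral {a..b} F / m) {?a..?b}" by simp
    then show ?thesis by (rule integral_unique)
  next
    case False
    have "\<not> (\<lambda>s. F (m * s + k)) integrable_on {?a..?b}"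
    proof
      assume "(\<lambda>s. F (m * s + k)) integrable_on {?a..?b}"
      then obtain I where "((\<lambda>s. F (m * s + k)) has_integral I) (cbox ?a ?b)" by (auto simp: integrable_on_def)
      from has_integral_affinity'[OF this, of "1/m" "- k/m"] m
      have "((\<lambda>x. F (m * (x / m - k / m) + k)) has_integral m * I) {m * (?a + k / m)..m * (?b + k / m)}"
        by (simp add: mult.commute)
      moreover have "(\<lambda>x. F (m * (x / m - k / m) + k)) = F" using m by (simp add: algebra_simps)
      moreover have "m * (?a + k / m) = a" "m * (?b + k / m) = b" using m by (simp_all add: field_simps)
      ultimately show False using False by (auto simp: integrable_on_def)
    qed
    then show ?thesis using False by (simp add: not_integrable_integral)
  qed
  finally show ?thesis using C m unfolding JJ_def F_def by simp
qed


definition goodf :: "(real^'n \<Rightarrow> real) \<Rightarrow> real \<Rightarrow> bool" where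
  "goodf f M \<longleftrightarrow> (\<forall>x. 0 \<le> f x \<and> f x \<le> M) \<and> f \<in> borel_measurable borel
     \<and> (\<forall>x. f x \<noteq> 0 \<longrightarrow> (\<forall>i. 0 \<le> x $ i \<and> x $ i \<le> 1))"

lemma C1on_cont: "C1on a b \<gamma> g \<Longrightarrow> continuous_on {a..b} \<gamma>"
  unfolding C1on_def continuous_on_eq_continuous_within
  using has_vector_derivative_continuous by blast

lemma C1on_sub: "C1on a b \<gamma> g \<Longrightarrow> a \<le> s \<Longrightarrow> s < t \<Longrightarrow> t \<le> b \<Longrightarrow> C1on s t \<gamma> g"
  unfolding C1on_def
  by (auto intro: has_vector_derivative_within_subset[where S="{a..b}"] continuous_on_subset[where s="{a..b}"])

lemma Gd_nonneg: "0 \<le> Gd v" unfolding Gd_def by simp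

lemma Gd_cont: "continuous_on S g \<Longrightarrow> (\<And>t. t \<in> S \<Longrightarrow> \<forall>i. 0 \<le> g t $ i) \<Longrightarrow> continuous_on S (\<lambda>t. Gd (g t :: real^'n))"
  unfolding Gd_def
  by (intro continuous_on_powr' continuous_intros) (auto simp: prod_nonneg)

lemma C1on_Gd_bound:
  fixes g :: "real \<Rightarrow> real^'n"
  assumes "C1on a b \<gamma> g"
  shows "\<exists>B. \<forall>t\<in>{a..b}. Gd (g t) \<le> B"
proof -
  have "continuous_on {a..b} (\<lambda>t. Gd (g t))"
    using assms unfolding C1on_def by (intro Gd_cont) auto
  then have "compact ((\<lambda>t. Gd (g t)) ` {a..b})" by (intro compact_continuous_image) auto
  then obtain B where "\<forall>x\<in>(\<lambda>t. Gd (g t)) ` {a..b}. norm x \<le> B"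
    using compact_imp_bounded bounded_iff by metis
  then show ?thesis by (auto intro!: exI[of _ B])
qed

lemma powr_f_le:
  assumes "goodf f M" shows "f x powr (1 / real CARD('n)) \<le> M powr (1 / real CARD('n))"
  using assms unfolding goodf_def by (intro powr_mono2) auto

lemma JJ_integrable:
  fixes \<gamma> g :: "real \<Rightarrow> real^'n"
  assumes f: "goodf f M" and c: "C1on a b \<gamma> g"
  shows "(\<lambda>t. f (\<gamma> t) powr (1 / real CARD('n)) * Gd (g t)) integrable_on {a..b}"
proof -
  obtain B where B: "\<forall>t\<in>{a..b}. Gd (g t) \<le> B" using C1on_Gd_bound[OF c] by blast
  have meas1: "\<gamma> \<in> borel_measurable (lebesgue_on {a..b})"
    using C1on_cont[OF c] by (intro continuous_imp_measurable_on_sets_lebesgue) auto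
  have fm: "f \<in> borel_measurable borel" using f unfolding goodf_def by auto
  have m2: "(\<lambda>t. f (\<gamma> t)) \<in> borel_measurable (lebesgue_on {a..b})"
    using measurable_compose[OF meas1 fm] by (simp add: o_def)
  have m3: "(\<lambda>t. Gd (g t)) \<in> borel_measurable (lebesgue_on {a..b})"
    using c unfolding C1on_def by (intro continuous_imp_measurable_on_sets_lebesgue Gd_cont) auto
  have m: "(\<lambda>t. f (\<gamma> t) powr (1 / real CARD('n)) * Gd (g t)) \<in> borel_measurable (lebesgue_on {a..b})"
    by (intro borel_measurable_times powr_real_measurable m2 m3 borel_measurable_const)
  show ?thesis
  proof (rule measurable_bounded_by_integrable_imp_integrable_real[OF m])
    show "(\<lambda>t. M powr (1 / real CARD('n)) * B) integrable_on {a..b}" by (rule integrable_const_ivl)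
    show "\<bar>f (\<gamma> t) powr (1 / real CARD('n)) * Gd (g t)\<bar> \<le> M powr (1 / real CARD('n)) * B"
      if "t \<in> {a..b}" for t
      using powr_f_le[OF f, of "\<gamma> t"] B that Gd_nonneg[of "g t"]
      by (auto simp: abs_mult intro!: mult_mono)
  qed auto
qed

lemma JJ_split:
  fixes \<gamma> g :: "real \<Rightarrow> real^'n"
  assumes f: "goodf f M" and c: "C1on a b \<gamma> g" and "a \<le> s" "s \<le> b"
  shows "JJ f \<gamma> g a b = JJ f \<gamma> g a s + JJ f \<gamma> g s b"
  unfolding JJ_def using Henstock_Kurzweil_Integration.integral_combine[OF assms(3,4) JJ_integrable[OF f c]] by simp

lemma JJ_nonneg:
  fixes \<gamma> g :: "real \<Rightarrow> real^'n"
  shows "0 \<le> JJ f \<gamma> g s t"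
  unfolding JJ_def
proof (cases "(\<lambda>t. f (\<gamma> t) powr (1 / real CARD('n)) * Gd (g t)) integrable_on {s..t}")
  case True
  then show "0 \<le> integral {s..t} (\<lambda>t. f (\<gamma> t) powr (1 / real CARD('n)) * Gd (g t))"
    by (rule integral_nonneg) (simp add: Gd_nonneg)
qed (simp add: not_integrable_integral)

lemma JJ_le_length:
  fixes \<gamma> g :: "real \<Rightarrow> real^'n"
  assumes f: "goodf f M" and c: "C1on a b \<gamma> g"
  shows "\<exists>K\<ge>0. \<forall>s t. a \<le> s \<longrightarrow> s \<le> t \<longrightarrow> t \<le> b \<longrightarrow> JJ f \<gamma> g s t \<le> K * (t - s)"
proof -
  obtain B where B: "\<forall>t\<in>{a..b}. Gd (g t) \<le> B" using C1on_Gd_bound[OF c] by blast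
  define K where "K = M powr (1 / real CARD('n)) * max B 0"
  have K: "K \<ge> 0" unfolding K_def by simp
  show ?thesis
  proof (intro exI[of _ K] conjI K allI impI)
    fix s t assume st: "a \<le> s" "s \<le> t" "t \<le> b"
    have int: "(\<lambda>t. f (\<gamma> t) powr (1 / real CARD('n)) * Gd (g t)) integrable_on {s..t}"
      by (rule integrable_subinterval_real[OF JJ_integrable[OF f c]]) (use st in auto)
    have "JJ f \<gamma> g s t \<le> integral {s..t} (\<lambda>_. K)"
      unfolding JJ_def
    proof (rule integral_le[OF int])
      show "(\<lambda>_. K) integrable_on {s..t}" by (rule integrable_const_ivl)
      fix x assume x: "x \<in> {s..t}"
      then have "x \<in> {a..b}" using st by auto
      then have "Gd (g x) \<le> max B 0" using B by fastforce
      then show "f (\<gamma> x) powr (1 / real CARD('n)) * Gd (g x) \<le> K"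
        unfolding K_def using powr_f_le[OF f, of "\<gamma> x"] Gd_nonneg[of "g x"]
        by (intro mult_mono) auto
    qed
    also have "\<dots> = K * (t - s)" using st by simp
    finally show "JJ f \<gamma> g s t \<le> K * (t - s)" .
  qed
qed

lemma C1on_mono:
  fixes \<gamma> g :: "real \<Rightarrow> real^'n"
  assumes c: "C1on a b \<gamma> g" and st: "a \<le> s" "s \<le> t" "t \<le> b"
  shows "cle (\<gamma> s) (\<gamma> t)"
  unfolding cle_def
proof
  fix i
  have I: "(g has_integral (\<gamma> t - \<gamma> s)) {s..t}"
  proof (rule fundamental_theorem_of_calculus[OF st(2)])
    fix x assume "x \<in> {s..t}"
    then show "(\<gamma> has_vector_derivative g x) (at x within {s..t})"
      using c st unfolding C1on_def by (auto intro: has_vector_derivative_within_subset[where S="{a..b}"])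
  qed
  have X: "0 \<le> g x \<bullet> axis i 1" if "x \<in> {s..t}" for x
    using c st that unfolding C1on_def by (auto simp: inner_axis)
  have "0 \<le> (\<gamma> t - \<gamma> s) \<bullet> axis i 1"
    by (rule has_integral_component_nonneg[OF _ I X]) auto
  then show "\<gamma> s $ i \<le> \<gamma> t $ i" by (simp add: inner_axis)
qed

lemma C1on_glue:
  fixes \<gamma>1 \<gamma>2 g1 g2 :: "real \<Rightarrow> real^'n"
  assumes c1: "C1on a c \<gamma>1 g1" and c2: "C1on c b \<gamma>2 g2" and e: "\<gamma>1 c = \<gamma>2 c" "g1 c = g2 c"
  shows "C1on a b (\<lambda>t. if t \<le> c then \<gamma>1 t else \<gamma>2 t) (\<lambda>t. if t \<le> c then g1 t else g2 t)"
    and "goodf f M \<Longrightarrow> JJ f (\<lambda>t. if t \<le> c then \<gamma>1 t else \<gamma>2 t) (\<lambda>t. if t \<le> c then g1 t else g2 t) a b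
        = JJ f \<gamma>1 g1 a c + JJ f \<gamma>2 g2 c b"
proof -
  have ac: "a < c" and cb: "c < b" using c1 c2 unfolding C1on_def by auto
  have U: "{a..b} = {a..c} \<union> {c..b}" using ac cb by auto
  have cl: "closure {a..c} \<inter> closure {c..b} = {c}" using ac cb by (simp add: closure_closed)
  have e1: "{a..c} \<union> {c} = {a..c}" and e2: "{c..b} \<union> {c} = {c..b}" using ac cb by auto
  have der: "((\<lambda>t. if t \<le> c then \<gamma>1 t else \<gamma>2 t) has_vector_derivative (if t \<le> c then g1 t else g2 t))
      (at t within {a..b})" if t: "t \<in> {a..b}" for t
  proof -
    have D: "((\<lambda>x. if x \<in> {a..c} then \<gamma>1 x else \<gamma>2 x) has_vector_derivative
        (if t \<in> {a..c} then g1 t else g2 t)) (at t within {a..b})"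
      apply (rule has_vector_derivative_If_within_closures[OF _ U])
      subgoal using t U by blast
      subgoal using c1 unfolding cl e1 C1on_def by blast
      subgoal using c2 unfolding cl e2 C1on_def by blast
      subgoal using e by (simp add: closure_closed) (metis order_antisym)
      subgoal using e by (simp add: closure_closed) (metis order_antisym)
      done
    have eqf: "\<And>x. x \<in> {a..b} \<Longrightarrow> (if x \<in> {a..c} then \<gamma>1 x else \<gamma>2 x) = (if x \<le> c then \<gamma>1 x else \<gamma>2 x)"
      by auto
    have "(if t \<in> {a..c} then g1 t else g2 t) = (if t \<le> c then g1 t else g2 t)" using t by auto
    with has_vector_derivative_weaken[OF D t order_refl eqf] show ?thesis by simp
  qed
  have cont: "continuous_on {a..b} (\<lambda>t. if t \<le> c then g1 t else g2 t)"
  proof -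
    have A0: "continuous_on {a..c} g1" using c1 by (simp add: C1on_def)
    have A: "continuous_on {t \<in> {a..b}. t \<le> c} g1"
      by (rule continuous_on_subset[OF A0]) auto
    have B0: "continuous_on {c..b} g2" using c2 by (simp add: C1on_def)
    have B: "continuous_on {t \<in> {a..b}. c \<le> t} g2"
      by (rule continuous_on_subset[OF B0]) auto
    show ?thesis
      by (rule continuous_on_cases_le[where h="\<lambda>t. t", OF A B]) (use e in \<open>auto intro: continuous_on_id\<close>)
  qed
  have pos: "\<forall>t\<in>{a..b}. (\<forall>i. 0 \<le> (if t \<le> c then g1 t else g2 t) $ i) \<and> (if t \<le> c then g1 t else g2 t) \<noteq> 0"
    using c1 c2 unfolding C1on_def by auto
  show C: "C1on a b (\<lambda>t. if t \<le> c then \<gamma>1 t else \<gamma>2 t) (\<lambda>t. if t \<le> c then g1 t else g2 t)"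
    unfolding C1on_def using ac cb der cont pos by auto
  assume f: "goodf f M"
  show "JJ f (\<lambda>t. if t \<le> c then \<gamma>1 t else \<gamma>2 t) (\<lambda>t. if t \<le> c then g1 t else g2 t) a b
        = JJ f \<gamma>1 g1 a c + JJ f \<gamma>2 g2 c b"
  proof -
    have "JJ f (\<lambda>t. if t \<le> c then \<gamma>1 t else \<gamma>2 t) (\<lambda>t. if t \<le> c then g1 t else g2 t) a b
       = JJ f (\<lambda>t. if t \<le> c then \<gamma>1 t else \<gamma>2 t) (\<lambda>t. if t \<le> c then g1 t else g2 t) a c
       + JJ f (\<lambda>t. if t \<le> c then \<gamma>1 t else \<gamma>2 t) (\<lambda>t. if t \<le> c then g1 t else g2 t) c b"
      using JJ_split[OF f C, of c] ac cb by simp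
    also have "JJ f (\<lambda>t. if t \<le> c then \<gamma>1 t else \<gamma>2 t) (\<lambda>t. if t \<le> c then g1 t else g2 t) a c = JJ f \<gamma>1 g1 a c"
      unfolding JJ_def by (rule integral_cong) auto
    also have "JJ f (\<lambda>t. if t \<le> c then \<gamma>1 t else \<gamma>2 t) (\<lambda>t. if t \<le> c then g1 t else g2 t) c b = JJ f \<gamma>2 g2 c b"
      unfolding JJ_def by (rule integral_cong) (use e in auto)
    finally show ?thesis .
  qed
qed


lemma mem_Q: "(x::real^'n) \<in> cbox 0 1 \<longleftrightarrow> (\<forall>i. 0 \<le> x $ i \<and> x $ i \<le> 1)"
  by (simp add: mem_box_cart)

lemma amgm_Gd:
  fixes v :: "real^'n"
  assumes v: "\<forall>i. 0 \<le> v $ i" and cpos: "\<forall>i. 0 < cc i" and cp: "(\<Prod>i\<in>UNIV. cc i) = 1"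
  shows "Gd v \<le> (\<Sum>i\<in>UNIV. cc i * v $ i) / real CARD('n)"
proof -
  have e: "(\<Prod>i\<in>UNIV. cc i * v $ i) = (\<Prod>i\<in>UNIV. v $ i)" using cp by (simp add: prod.distrib)
  have nn: "\<And>i. 0 \<le> cc i * v $ i" using v cpos by (simp add: less_imp_le)
  have "(\<Prod>i\<in>UNIV. cc i * v $ i) powr (1 / real (card (UNIV::'n set))) \<le> (\<Sum>i\<in>UNIV. cc i * v $ i / real (card (UNIV::'n set)))"
    by (rule arith_geom_mean) (simp_all add: nn)
  then show ?thesis unfolding Gd_def e by (simp add: sum_divide_distrib)
qed


lemma JJ_box_bound:
  fixes \<gamma> g :: "real \<Rightarrow> real^'n"
  assumes f: "goodf f M" and c: "C1on a b \<gamma> g" and st: "a \<le> s" "s \<le> t" "t \<le> b"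
    and cpos: "\<forall>i. 0 < cc i" and cp: "(\<Prod>i\<in>UNIV. cc i) = 1" and dpos: "\<forall>i. 0 \<le> \<delta> i"
    and hd: "\<And>i u v. s \<le> u \<Longrightarrow> u \<le> v \<Longrightarrow> v \<le> t \<Longrightarrow> \<gamma> u \<in> cbox 0 1 \<Longrightarrow> \<gamma> v \<in> cbox 0 1
        \<Longrightarrow> \<gamma> v $ i - \<gamma> u $ i \<le> \<delta> i"
  shows "JJ f \<gamma> g s t \<le> M powr (1 / real CARD('n)) * (\<Sum>i\<in>UNIV. cc i * \<delta> i) / real CARD('n)"
proof -
  define H where "H = M powr (1 / real CARD('n))"
  define F where "F u = f (\<gamma> u) powr (1 / real CARD('n)) * Gd (g u)" for u
  define T where "T = {u \<in> {s..t}. \<gamma> u \<in> cbox 0 1}"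
  have H0: "0 \<le> H" unfolding H_def by simp
  have rhs0: "0 \<le> H * (\<Sum>i\<in>UNIV. cc i * \<delta> i) / real CARD('n)"
  proof -
    have "0 \<le> cc i * \<delta> i" for i using cpos dpos by (simp add: less_imp_le)
    then have "0 \<le> (\<Sum>i\<in>UNIV. cc i * \<delta> i)" by (simp add: sum_nonneg)
    then show ?thesis using H0 by simp
  qed
  have Fz: "F u = 0" if "u \<notin> T" "u \<in> {s..t}" for u
  proof -
    have "\<not> (\<forall>i. 0 \<le> \<gamma> u $ i \<and> \<gamma> u $ i \<le> 1)" using that unfolding T_def mem_Q by auto
    then have "f (\<gamma> u) = 0" using f unfolding goodf_def by blast
    then show ?thesis unfolding F_def by simp
  qed
  have JJe: "JJ f \<gamma> g s t = integral {s..t} (\<lambda>u. if u \<in> T then F u else 0)"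
    unfolding JJ_def F_def[symmetric] by (rule integral_cong) (use Fz in auto)
  show ?thesis
  proof (cases "T = {}")
    case True
    then have "JJ f \<gamma> g s t = 0" unfolding JJe by simp
    then show ?thesis using rhs0 unfolding H_def by simp
  next
    case False
    have cT: "compact T"
    proof -
      have "continuous_on {s..t} \<gamma>"
        by (rule continuous_on_subset[OF C1on_cont[OF c]]) (use st in auto)
      then have "closed ({s..t} \<inter> \<gamma> -` cbox 0 1)"
        by (rule continuous_closed_preimage) (simp_all add: closed_cbox)
      moreover have "T = {s..t} \<inter> \<gamma> -` cbox 0 1" unfolding T_def by auto
      ultimately show ?thesis by (metis bounded_Int bounded_closed_interval compact_eq_bounded_closed)
    qed
    have iT: "is_interval T"
      unfolding is_interval_1
    proof (intro ballI allI impI)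
      fix u1 u2 x assume u: "u1 \<in> T" "u2 \<in> T" "u1 \<le> x \<and> x \<le> u2"
      have "cle (\<gamma> u1) (\<gamma> x)" "cle (\<gamma> x) (\<gamma> u2)"
        proof -
        have o: "a \<le> u1" "u1 \<le> x" "x \<le> u2" "u2 \<le> b" using u st unfolding T_def by auto
        have "a \<le> x" "x \<le> b" using o by linarith+
        then show "cle (\<gamma> u1) (\<gamma> x)" "cle (\<gamma> x) (\<gamma> u2)"
          using C1on_mono[OF c o(1,2)] C1on_mono[OF c _ o(3,4)] by auto
      qed
      have xs: "x \<in> {s..t}" using u unfolding T_def by auto
      have "\<forall>i. 0 \<le> \<gamma> x $ i \<and> \<gamma> x $ i \<le> 1"
      proof
        fix i
        have "\<gamma> u1 $ i \<le> \<gamma> x $ i" "\<gamma> x $ i \<le> \<gamma> u2 $ i" using \<open>cle (\<gamma> u1) (\<gamma> x)\<close> \<open>cle (\<gamma> x) (\<gamma> u2)\<close>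
          unfolding cle_def by auto
        moreover have "0 \<le> \<gamma> u1 $ i" "\<gamma> u2 $ i \<le> 1" using u(1,2) unfolding T_def mem_Q by auto
        ultimately show "0 \<le> \<gamma> x $ i \<and> \<gamma> x $ i \<le> 1" by linarith
      qed
      then show "x \<in> T" using xs unfolding T_def mem_Q by auto
    qed
    have HI: "((\<lambda>u. H / real CARD('n) * (\<Sum>i\<in>UNIV. cc i * g u $ i)) has_integral
        H / real CARD('n) * (\<Sum>i\<in>UNIV. cc i * (\<gamma> t2 $ i - \<gamma> t1 $ i))) {t1..t2}"
      if t12: "s \<le> t1" "t1 \<le> t2" "t2 \<le> t" for t1 t2
    proof -
      have I: "(g has_integral \<gamma> t2 - \<gamma> t1) {t1..t2}"
      proof (rule fundamental_theorem_of_calculus[OF t12(2)])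
        fix x assume "x \<in> {t1..t2}"
        then show "(\<gamma> has_vector_derivative g x) (at x within {t1..t2})"
          using c st t12 unfolding C1on_def by (auto intro: has_vector_derivative_within_subset[where S="{a..b}"])
      qed
      have "((\<lambda>u. g u $ i) has_integral (\<gamma> t2 $ i - \<gamma> t1 $ i)) {t1..t2}" for i
        using has_integral_linear[OF I bounded_linear_vec_nth] by (simp add: o_def)
      then have Ii: "((\<lambda>u. cc i * g u $ i) has_integral cc i * (\<gamma> t2 $ i - \<gamma> t1 $ i)) {t1..t2}" for i
        by (rule has_integral_mult_right)
      have "((\<lambda>u. \<Sum>i\<in>UNIV. cc i * g u $ i) has_integral (\<Sum>i\<in>UNIV. cc i * (\<gamma> t2 $ i - \<gamma> t1 $ i))) {t1..t2}"
        by (rule has_integral_sum[OF finite_class.finite_UNIV Ii])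
      then show ?thesis by (rule has_integral_mult_right)
    qed
    obtain t1 t2 where T12: "T = {t1..t2}"
      using connected_compact_interval_1 cT is_interval_connected[OF iT] by blast
    have t12a: "t1 \<le> t2" using False T12 by simp
    have inT: "t1 \<in> T" "t2 \<in> T" using T12 t12a by auto
    have t12: "t1 \<le> t2" "s \<le> t1" "t2 \<le> t" using t12a inT unfolding T_def by auto
    have "JJ f \<gamma> g s t = integral {t1..t2} F"
      unfolding JJe integral_restrict_Int T12 using t12 by (simp add: Int_absorb1)
    also have "\<dots> \<le> integral {t1..t2} (\<lambda>u. H / real CARD('n) * (\<Sum>i\<in>UNIV. cc i * g u $ i))"
    proof (rule integral_le)
      show "F integrable_on {t1..t2}" unfolding F_def
        by (rule integrable_subinterval_real[OF JJ_integrable[OF f c]]) (use st t12 in auto)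
      show "(\<lambda>u. H / real CARD('n) * (\<Sum>i\<in>UNIV. cc i * g u $ i)) integrable_on {t1..t2}"
        using HI[OF t12(2) t12(1) t12(3)] by (rule has_integral_integrable)
      fix u assume u: "u \<in> {t1..t2}"
      then have uab: "u \<in> {a..b}" using st t12 by auto
      have gn: "\<forall>i. 0 \<le> g u $ i" using c uab unfolding C1on_def by auto
      have "F u \<le> H * Gd (g u)" unfolding F_def H_def
        by (rule mult_right_mono[OF powr_f_le[OF f] Gd_nonneg])
      also have "\<dots> \<le> H * ((\<Sum>i\<in>UNIV. cc i * g u $ i) / real CARD('n))"
        by (rule mult_left_mono[OF amgm_Gd[OF gn cpos cp] H0])
      finally show "F u \<le> H / real CARD('n) * (\<Sum>i\<in>UNIV. cc i * g u $ i)" by simp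
    qed
    also have "\<dots> = H / real CARD('n) * (\<Sum>i\<in>UNIV. cc i * (\<gamma> t2 $ i - \<gamma> t1 $ i))"
      using HI[OF t12(2) t12(1) t12(3)] by (rule integral_unique)
    also have "\<dots> \<le> H / real CARD('n) * (\<Sum>i\<in>UNIV. cc i * \<delta> i)"
    proof (rule mult_left_mono)
      show "0 \<le> H / real CARD('n)" using H0 by simp
      show "(\<Sum>i\<in>UNIV. cc i * (\<gamma> t2 $ i - \<gamma> t1 $ i)) \<le> (\<Sum>i\<in>UNIV. cc i * \<delta> i)"
      proof (rule sum_mono)
        fix i
        have Q12: "\<gamma> t1 \<in> cbox 0 1" "\<gamma> t2 \<in> cbox 0 1" using inT unfolding T_def by auto
        have "\<gamma> t2 $ i - \<gamma> t1 $ i \<le> \<delta> i"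
          by (rule hd[OF t12(2) t12(1) t12(3) Q12])
        then show "cc i * (\<gamma> t2 $ i - \<gamma> t1 $ i) \<le> cc i * \<delta> i"
          using cpos by (simp add: less_imp_le)
      qed
    qed
    finally show ?thesis unfolding H_def by simp
  qed
qed


lemma JJ_bound1:
  fixes \<gamma> g :: "real \<Rightarrow> real^'n"
  assumes f: "goodf f M" and c: "C1on a b \<gamma> g" and st: "a \<le> s" "s \<le> t" "t \<le> b"
  shows "JJ f \<gamma> g s t \<le> M powr (1 / real CARD('n))"
proof -
  have "JJ f \<gamma> g s t \<le> M powr (1 / real CARD('n)) * (\<Sum>i\<in>(UNIV::'n set). 1 * 1) / real CARD('n)"
  proof (rule JJ_box_bound[OF f c st, where cc="\<lambda>_. 1" and \<delta>="\<lambda>_. 1"])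
    fix i u v assume "\<gamma> u \<in> cbox 0 1" "\<gamma> v \<in> cbox 0 1"
    then have "0 \<le> \<gamma> u $ i" "\<gamma> v $ i \<le> 1" unfolding mem_Q by auto
    then show "\<gamma> v $ i - \<gamma> u $ i \<le> 1" by simp
  qed auto
  then show ?thesis by simp
qed

lemma JJ_bound_eps:
  fixes \<gamma> g :: "real \<Rightarrow> real^'n"
  assumes f: "goodf f M" and c: "C1on a b \<gamma> g" and st: "a \<le> s" "s \<le> t" "t \<le> b"
    and e: "0 < e" and j: "\<gamma> t $ j - \<gamma> s $ j \<le> e"
  shows "JJ f \<gamma> g s t \<le> M powr (1 / real CARD('n)) * e powr (1 / real CARD('n))"
proof -
  define q where "q i = (if i = j then e else 1)" for i
  define p where "p = e powr (1 / real CARD('n))"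
  have p0: "p > 0" unfolding p_def using e by simp
  have q0: "q i > 0" for i unfolding q_def using e by simp
  have pq: "(\<Prod>i\<in>UNIV. q i) = e" unfolding q_def by (simp add: prod.delta)
  have pp: "p ^ CARD('n) = e" unfolding p_def using e
    by (simp add: powr_realpow[symmetric] powr_powr)
  have cp: "(\<Prod>i\<in>UNIV. p / q i) = 1"
    using pq pp e by (simp add: prod_dividef)
  have "JJ f \<gamma> g s t \<le> M powr (1 / real CARD('n)) * (\<Sum>i\<in>UNIV. p / q i * q i) / real CARD('n)"
  proof (rule JJ_box_bound[OF f c st])
    show "\<forall>i. 0 < p / q i" using p0 q0 by simp
    show "(\<Prod>i\<in>UNIV. p / q i) = 1" by (rule cp)
    show "\<forall>i. 0 \<le> q i" using q0 by (simp add: less_imp_le)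
    fix i u v assume uv: "s \<le> u" "u \<le> v" "v \<le> t" "\<gamma> u \<in> cbox 0 1" "\<gamma> v \<in> cbox 0 1"
    show "\<gamma> v $ i - \<gamma> u $ i \<le> q i"
    proof (cases "i = j")
      case True
      have o: "u \<le> b" "a \<le> v" using uv st by linarith+
      have "cle (\<gamma> s) (\<gamma> u)" "cle (\<gamma> v) (\<gamma> t)"
        using C1on_mono[OF c st(1) uv(1) o(1)] C1on_mono[OF c o(2) uv(3) st(3)] by auto
      then have "\<gamma> s $ j \<le> \<gamma> u $ j" "\<gamma> v $ j \<le> \<gamma> t $ j" unfolding cle_def by auto
      then show ?thesis using True j unfolding q_def by simp
    next
      case False
      have "0 \<le> \<gamma> u $ i" "\<gamma> v $ i \<le> 1" using uv(4,5) unfolding mem_Q by auto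
      then show ?thesis using False unfolding q_def by simp
    qed
  qed
  also have "(\<Sum>i\<in>UNIV. p / q i * q i) = real CARD('n) * p"
    using q0 by (simp add: less_imp_neq[symmetric])
  finally show ?thesis unfolding p_def by simp
qed


lemma C1on_to01:
  fixes \<gamma> g :: "real \<Rightarrow> real^'n"
  assumes c: "C1on a b \<gamma> g"
  shows "\<exists>\<gamma>' g'. C1on 0 1 \<gamma>' g' \<and> JJ f \<gamma>' g' 0 1 = JJ f \<gamma> g a b \<and> \<gamma>' 0 = \<gamma> a \<and> \<gamma>' 1 = \<gamma> b
     \<and> (\<forall>s\<in>{0..1}. \<exists>t\<in>{a..b}. \<gamma>' s = \<gamma> t)"
proof -
  have ab: "a < b" using c unfolding C1on_def by auto
  define m where "m = b - a"
  have m: "m > 0" using ab unfolding m_def by simp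
  have e0: "(a - a) / m = 0" and e1: "(b - a) / m = 1" using m unfolding m_def by auto
  from C1on_reparam[OF c m, of a f] e0 e1
  have R: "C1on 0 1 (\<lambda>s. \<gamma> (m * s + a)) (\<lambda>s. m *\<^sub>R g (m * s + a))"
    "JJ f (\<lambda>s. \<gamma> (m * s + a)) (\<lambda>s. m *\<^sub>R g (m * s + a)) 0 1 = JJ f \<gamma> g a b" by auto
  have rng: "\<forall>s\<in>{0..1}. \<exists>t\<in>{a..b}. \<gamma> (m * s + a) = \<gamma> t"
  proof
    fix s :: real assume s: "s \<in> {0..1}"
    have "m * s \<le> m" using s m by (simp add: mult_left_le)
    moreover have "0 \<le> m * s" using s m by simp
    ultimately have "m * s + a \<in> {a..b}" unfolding m_def by auto
    then show "\<exists>t\<in>{a..b}. \<gamma> (m * s + a) = \<gamma> t" by blast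
  qed
  show ?thesis
    by (rule exI[of _ "\<lambda>s. \<gamma> (m * s + a)"], rule exI[of _ "\<lambda>s. m *\<^sub>R g (m * s + a)"])
      (use R rng in \<open>simp add: m_def\<close>)
qed

lemma line_C1on:
  fixes p v :: "real^'n"
  assumes "\<forall>i. 0 \<le> v $ i" "v \<noteq> 0"
  shows "C1on 0 1 (\<lambda>t. p + t *\<^sub>R v) (\<lambda>t. v)"
  unfolding C1on_def using assms
  by (auto intro!: derivative_eq_intros)

lemma Jfun_bounds:
  fixes \<gamma> :: "real \<Rightarrow> real^'n"
  assumes f: "goodf f M" and a: "admissible \<gamma>"
  shows "0 \<le> Jfun f \<gamma>" "Jfun f \<gamma> \<le> M powr (1 / real CARD('n))"
proof -
  obtain g where g: "C1on 0 1 \<gamma> g" using admissible_C1on[OF a] by blast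
  have J: "Jfun f \<gamma> = JJ f \<gamma> g 0 1" using C1on_admissible[OF g] by simp
  show "0 \<le> Jfun f \<gamma>" unfolding J by (rule JJ_nonneg)
  show "Jfun f \<gamma> \<le> M powr (1 / real CARD('n))" unfolding J by (rule JJ_bound1[OF f g]) auto
qed

lemma SU_ne: "{Jfun f \<gamma> | \<gamma>. admissible \<gamma> \<and> cle (\<gamma> 1) (x::real^'n)} \<noteq> {}"
proof -
  have C: "C1on 0 1 (\<lambda>t. (x - 1) + t *\<^sub>R 1) (\<lambda>t. 1::real^'n)"
    by (rule line_C1on) (auto simp: vec_eq_iff)
  have "admissible (\<lambda>t. (x - 1) + t *\<^sub>R 1)" using C1on_admissible[OF C] by simp
  moreover have "cle ((\<lambda>t. (x - 1) + t *\<^sub>R (1::real^'n)) 1) x" unfolding cle_def by simp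
  ultimately show ?thesis by blast
qed

lemma U_upper:
  fixes \<gamma> :: "real \<Rightarrow> real^'n"
  assumes f: "goodf f M" and a: "admissible \<gamma>" and c: "cle (\<gamma> 1) x"
  shows "Jfun f \<gamma> \<le> Ufun f x"
  unfolding Ufun_def
proof (rule cSup_upper)
  show "Jfun f \<gamma> \<in> {Jfun f \<gamma> |\<gamma>. admissible \<gamma> \<and> cle (\<gamma> 1) x}" using a c by blast
  show "bdd_above {Jfun f \<gamma> |\<gamma>. admissible \<gamma> \<and> cle (\<gamma> 1) x}"
    unfolding bdd_above_def using Jfun_bounds(2)[OF f] by blast
qed

lemma U_least:
  fixes x :: "real^'n"
  assumes "\<And>\<gamma>. admissible \<gamma> \<Longrightarrow> cle (\<gamma> 1) x \<Longrightarrow> Jfun f \<gamma> \<le> B"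
  shows "Ufun f x \<le> B"
  unfolding Ufun_def using SU_ne[of f x] assms by (intro cSup_least) auto

lemma U_nonneg:
  fixes x :: "real^'n"
  assumes f: "goodf f M"
  shows "0 \<le> Ufun f x"
proof -
  obtain J where "J \<in> {Jfun f \<gamma> | \<gamma>. admissible \<gamma> \<and> cle (\<gamma> 1) x}" using SU_ne[of f x] by blast
  then obtain \<gamma> where "admissible \<gamma>" "cle (\<gamma> 1) x" by blast
  then show ?thesis using Jfun_bounds(1)[OF f] U_upper[OF f] by (meson order_trans)
qed

lemma U_bound:
  fixes x :: "real^'n"
  assumes f: "goodf f M"
  shows "Ufun f x \<le> M powr (1 / real CARD('n))"
  by (rule U_least) (rule Jfun_bounds(2)[OF f])

lemma SW_ne:
  fixes x y :: "real^'n"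
  assumes "cle x y" "x \<noteq> y"
  shows "\<exists>\<gamma>. admissible \<gamma> \<and> (\<forall>t\<in>{0..1}. cle x (\<gamma> t) \<and> cle (\<gamma> t) y)"
proof -
  have C: "C1on 0 1 (\<lambda>t. x + t *\<^sub>R (y - x)) (\<lambda>t. y - x)"
    by (rule line_C1on) (use assms in \<open>auto simp: cle_def\<close>)
  have "cle x (x + t *\<^sub>R (y - x)) \<and> cle (x + t *\<^sub>R (y - x)) y" if "t \<in> {0..1}" for t
  proof -
    have "x $ i \<le> x $ i + t * (y $ i - x $ i) \<and> x $ i + t * (y $ i - x $ i) \<le> y $ i" for i
    proof -
      have "0 \<le> y $ i - x $ i" using assms unfolding cle_def by auto
      moreover have "t * (y $ i - x $ i) \<le> 1 * (y $ i - x $ i)"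
        using that calculation by (intro mult_right_mono) auto
      ultimately show ?thesis using that by simp
    qed
    then show ?thesis unfolding cle_def by simp
  qed
  then show ?thesis using C1on_admissible[OF C] by blast
qed

lemma W_upper:
  fixes \<gamma> :: "real \<Rightarrow> real^'n"
  assumes f: "goodf f M" and a: "admissible \<gamma>" and c: "\<forall>t\<in>{0..1}. cle x (\<gamma> t) \<and> cle (\<gamma> t) y"
  shows "Jfun f \<gamma> \<le> wfun f x y"
proof -
  have xy: "cle x y" using c unfolding cle_def by (meson atLeastAtMost_iff order_trans zero_le_one order_refl)
  show ?thesis
    unfolding wfun_def if_P[OF xy]
  proof (rule cSup_upper)
    show "Jfun f \<gamma> \<in> {Jfun f \<gamma> |\<gamma>. admissible \<gamma> \<and> (\<forall>t\<in>{0..1}. cle x (\<gamma> t) \<and> cle (\<gamma> t) y)}" using a c by blast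
    show "bdd_above {Jfun f \<gamma> |\<gamma>. admissible \<gamma> \<and> (\<forall>t\<in>{0..1}. cle x (\<gamma> t) \<and> cle (\<gamma> t) y)}"
      unfolding bdd_above_def using Jfun_bounds(2)[OF f] by blast
  qed
qed

lemma W_least:
  fixes x y :: "real^'n"
  assumes xy: "cle x y" "x \<noteq> y"
    and B: "\<And>\<gamma>. admissible \<gamma> \<Longrightarrow> (\<forall>t\<in>{0..1}. cle x (\<gamma> t) \<and> cle (\<gamma> t) y) \<Longrightarrow> Jfun f \<gamma> \<le> B"
  shows "wfun f x y \<le> B"
  unfolding wfun_def if_P[OF xy(1)] using SW_ne[OF xy] B by (intro cSup_least) auto

lemma W_nonneg:
  fixes x y :: "real^'n"
  assumes f: "goodf f M" and xy: "x \<noteq> y"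
  shows "0 \<le> wfun f x y"
proof (cases "cle x y")
  case True
  then obtain \<gamma> where "admissible \<gamma>" "\<forall>t\<in>{0..1}. cle x (\<gamma> t) \<and> cle (\<gamma> t) y" using SW_ne xy by blast
  then show ?thesis using Jfun_bounds(1)[OF f] W_upper[OF f] by (meson order_trans)
qed (simp add: wfun_def)

lemma U_ge_C1:
  fixes \<gamma> g :: "real \<Rightarrow> real^'n"
  assumes f: "goodf f M" and c: "C1on a b \<gamma> g" and ac: "a < c" "c \<le> b" and x: "cle (\<gamma> c) x"
  shows "JJ f \<gamma> g a c \<le> Ufun f x"
proof -
  have c': "C1on a c \<gamma> g" using C1on_sub[OF c _ ac] by simp
  obtain \<gamma>' g' where G: "C1on 0 1 \<gamma>' g'" "JJ f \<gamma>' g' 0 1 = JJ f \<gamma> g a c" "\<gamma>' 1 = \<gamma> c"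
    using C1on_to01[OF c', of f] by blast
  show ?thesis using C1on_admissible[OF G(1), of f] U_upper[OF f, of \<gamma>' x] G x by simp
qed

lemma W_ge_C1:
  fixes \<gamma> g :: "real \<Rightarrow> real^'n"
  assumes f: "goodf f M" and c: "C1on a b \<gamma> g" and ac: "a \<le> c" "c < b"
    and x: "\<forall>t\<in>{c..b}. cle x (\<gamma> t) \<and> cle (\<gamma> t) y"
  shows "JJ f \<gamma> g c b \<le> wfun f x y"
proof -
  have c': "C1on c b \<gamma> g" using C1on_sub[OF c ac] by simp
  obtain \<gamma>' g' where G: "C1on 0 1 \<gamma>' g'" "JJ f \<gamma>' g' 0 1 = JJ f \<gamma> g c b"
      "\<forall>s\<in>{0..1}. \<exists>t\<in>{c..b}. \<gamma>' s = \<gamma> t"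
    using C1on_to01[OF c', of f] by blast
  have "\<forall>t\<in>{0..1}. cle x (\<gamma>' t) \<and> cle (\<gamma>' t) y" using G(3) x by metis
  then show ?thesis using C1on_admissible[OF G(1), of f] W_upper[OF f, of \<gamma>' x y] G by simp
qed


lemma cont_components:
  fixes \<gamma> :: "real \<Rightarrow> real^'n"
  assumes "continuous_on S \<gamma>" "t0 \<in> S" "\<delta> > 0"
  shows "\<exists>\<eta>>0. \<forall>t\<in>S. \<bar>t - t0\<bar> < \<eta> \<longrightarrow> (\<forall>i. \<bar>\<gamma> t $ i - \<gamma> t0 $ i\<bar> < \<delta>)"
proof -
  obtain \<eta> where \<eta>: "\<eta> > 0" "\<forall>t\<in>S. dist t t0 < \<eta> \<longrightarrow> dist (\<gamma> t) (\<gamma> t0) < \<delta>"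
    using assms unfolding continuous_on_iff by blast
  show ?thesis
  proof (intro exI[of _ \<eta>] conjI \<eta>(1) ballI impI allI)
    fix t i assume "t \<in> S" "\<bar>t - t0\<bar> < \<eta>"
    then have "norm (\<gamma> t - \<gamma> t0) < \<delta>" using \<eta>(2) by (simp add: dist_norm dist_real_def)
    moreover have "\<bar>(\<gamma> t - \<gamma> t0) $ i\<bar> \<le> norm (\<gamma> t - \<gamma> t0)" by (rule component_le_norm_cart)
    ultimately show "\<bar>\<gamma> t $ i - \<gamma> t0 $ i\<bar> < \<delta>" by simp
  qed
qed

lemma min_pos_components:
  fixes v :: "real^'n"
  assumes "\<forall>i. 0 < v $ i"
  shows "\<exists>\<delta>>0. \<forall>i. \<delta> \<le> v $ i"
proof -
  define \<delta> where "\<delta> = Min (range (\<lambda>i. v $ i))"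
  have "\<delta> > 0" unfolding \<delta>_def using assms by (subst Min_gr_iff) auto
  moreover have "\<forall>i. \<delta> \<le> v $ i" unfolding \<delta>_def by (auto intro: Min_le)
  ultimately show ?thesis by blast
qed

lemma U_mono:
  fixes x x' :: "real^'n"
  assumes f: "goodf f M" and "cle x x'"
  shows "Ufun f x \<le> Ufun f x'"
  by (rule U_least, rule U_upper[OF f]) (use assms(2) in \<open>auto simp: cle_def intro: order_trans\<close>)

lemma W_mono:
  fixes x1 x2 y :: "real^'n"
  assumes f: "goodf f M" and "cle x1 x2" "cle x2 y" "x2 \<noteq> y"
  shows "wfun f x2 y \<le> wfun f x1 y"
proof (rule W_least[OF assms(3,4)])
  fix \<gamma> assume "admissible \<gamma>" "\<forall>t\<in>{0..1}. cle x2 (\<gamma> t) \<and> cle (\<gamma> t) y"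
  then show "Jfun f \<gamma> \<le> wfun f x1 y"
    using assms(2) by (intro W_upper[OF f]) (auto simp: cle_def intro: order_trans)
qed

lemma closed_T: 
  fixes \<gamma> :: "real \<Rightarrow> real^'n"
  assumes "continuous_on {0..1} \<gamma>" "closed C"
  shows "compact {t \<in> {0..1}. \<gamma> t \<in> C}"
proof -
  have "closed ({0..1} \<inter> \<gamma> -` C)" by (rule continuous_closed_preimage) (use assms in auto)
  moreover have "{t \<in> {0..1}. \<gamma> t \<in> C} = {0..1} \<inter> \<gamma> -` C" by auto
  ultimately show ?thesis by (metis bounded_Int bounded_closed_interval compact_eq_bounded_closed)
qed

lemma closed_le: "closed {z::real^'n. cle z x}"
  unfolding cle_def by (simp add: closed_Collect_all closed_Collect_le continuous_on_component)

lemma closed_ge: "closed {z::real^'n. cle x z}"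
  unfolding cle_def by (simp add: closed_Collect_all closed_Collect_le continuous_on_component)


lemma JJ_point: "JJ f \<gamma> g a a = 0"
  unfolding JJ_def by simp

lemma U_shift:
  fixes x :: "real^'n"
  assumes f: "goodf f M" and e: "0 < e"
  shows "Ufun f (x + e *\<^sub>R 1) \<le> Ufun f x + M powr (1 / real CARD('n)) * e powr (1 / real CARD('n))"
proof (rule U_least)
  fix \<gamma> :: "real \<Rightarrow> real^'n"
  assume a: "admissible \<gamma>" and c1: "cle (\<gamma> 1) (x + e *\<^sub>R 1)"
  obtain g where g: "C1on 0 1 \<gamma> g" using admissible_C1on[OF a] by blast
  have J: "Jfun f \<gamma> = JJ f \<gamma> g 0 1" using C1on_admissible[OF g] by simp
  define B where "B = M powr (1 / real CARD('n)) * e powr (1 / real CARD('n))"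
  have Unn: "0 \<le> Ufun f x" by (rule U_nonneg[OF f])
  have Bnn: "0 \<le> B" unfolding B_def by simp
  have c1j: "\<gamma> 1 $ j \<le> x $ j + e" for j using c1 unfolding cle_def by simp
  define T where "T = {t \<in> {0..1}. \<gamma> t \<in> {z. cle z x}}"
  have cT: "compact T" unfolding T_def by (rule closed_T[OF C1on_cont[OF g] closed_le])
  show "Jfun f \<gamma> \<le> Ufun f x + M powr (1 / real CARD('n)) * e powr (1 / real CARD('n))"
  proof (cases "T = {}")
    case True
    then have "\<not> cle (\<gamma> 0) x" unfolding T_def by auto
    then obtain j where j: "x $ j < \<gamma> 0 $ j" unfolding cle_def by (auto simp: not_le)
    have X: "\<gamma> 1 $ j - \<gamma> 0 $ j \<le> e" using j c1j[of j] by simp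
    have "JJ f \<gamma> g 0 1 \<le> B" unfolding B_def by (rule JJ_bound_eps[OF f g _ _ _ e X]) auto
    then show ?thesis using Unn J unfolding B_def by simp
  next
    case False
    obtain t0 where t0: "t0 \<in> T" "\<forall>t\<in>T. t \<le> t0" using compact_attains_sup[OF cT False] by blast
    have t0r: "0 \<le> t0" "t0 \<le> 1" and t0x: "cle (\<gamma> t0) x" using t0(1) unfolding T_def by auto
    have first: "JJ f \<gamma> g 0 t0 \<le> Ufun f x"
    proof (cases "t0 = 0")
      case True then show ?thesis using Unn by (simp add: JJ_point)
    next
      case False
      then show ?thesis using t0r t0x by (intro U_ge_C1[OF f g]) auto
    qed
    have second: "JJ f \<gamma> g t0 1 \<le> B"
    proof (cases "t0 = 1")
      case True then show ?thesis using Bnn by (simp add: JJ_point)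
    next
      case False
      then have t01: "t0 < 1" using t0r by simp
      have "\<exists>j. \<gamma> t0 $ j = x $ j"
      proof (rule ccontr)
        assume "\<not> (\<exists>j. \<gamma> t0 $ j = x $ j)"
        then have lt: "\<forall>i. 0 < (x - \<gamma> t0) $ i" using t0x unfolding cle_def
          by (metis diff_gt_0_iff_gt order_le_neq_trans vector_minus_component)
        obtain \<delta> where \<delta>: "\<delta> > 0" "\<forall>i. \<delta> \<le> (x - \<gamma> t0) $ i" using min_pos_components[OF lt] by blast
        obtain \<eta> where \<eta>: "\<eta> > 0" "\<forall>t\<in>{0..1}. \<bar>t - t0\<bar> < \<eta> \<longrightarrow> (\<forall>i. \<bar>\<gamma> t $ i - \<gamma> t0 $ i\<bar> < \<delta>)"
          using cont_components[OF C1on_cont[OF g] _ \<delta>(1), of t0] t0r by auto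
        define t where "t = min 1 (t0 + \<eta> / 2)"
        have tr: "t \<in> {0..1}" "\<bar>t - t0\<bar> < \<eta>" "t0 < t" unfolding t_def using t0r t01 \<eta>(1) by auto
        have "\<forall>i. \<gamma> t $ i \<le> x $ i"
        proof
          fix i
          have "\<bar>\<gamma> t $ i - \<gamma> t0 $ i\<bar> < \<delta>" using \<eta>(2) tr by blast
          moreover have "\<delta> \<le> x $ i - \<gamma> t0 $ i" using \<delta>(2) by simp
          ultimately show "\<gamma> t $ i \<le> x $ i" by linarith
        qed
        then have "t \<in> T" using tr unfolding T_def cle_def by auto
        then show False using t0(2) tr(3) by fastforce
      qed
      then obtain j where j: "\<gamma> t0 $ j = x $ j" by blast
      have X: "\<gamma> 1 $ j - \<gamma> t0 $ j \<le> e" using j c1j[of j] by simp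
      show ?thesis unfolding B_def by (rule JJ_bound_eps[OF f g _ _ _ e X]) (use t0r in auto)
    qed
    have "JJ f \<gamma> g 0 1 = JJ f \<gamma> g 0 t0 + JJ f \<gamma> g t0 1" by (rule JJ_split[OF f g t0r])
    then show ?thesis using first second J unfolding B_def by simp
  qed
qed

lemma W_shift:
  fixes x y :: "real^'n"
  assumes f: "goodf f M" and xy: "cle x y" "x \<noteq> y" and e: "0 < e"
  shows "wfun f (x - e *\<^sub>R 1) y \<le> wfun f x y + M powr (1 / real CARD('n)) * e powr (1 / real CARD('n))"
proof (rule W_least)
  show xe: "cle (x - e *\<^sub>R 1) y" unfolding cle_def
  proof
    fix i show "(x - e *\<^sub>R 1) $ i \<le> y $ i" proof -
      have "x $ i \<le> y $ i" using xy(1) unfolding cle_def by blast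
      then show ?thesis using e by simp
    qed
  qed
  show "x - e *\<^sub>R 1 \<noteq> y"
  proof
    assume "x - e *\<^sub>R 1 = y"
    then have "(x - e *\<^sub>R 1) $ undefined = y $ undefined" by simp
    moreover have "x $ undefined \<le> y $ undefined" using xy unfolding cle_def by simp
    ultimately show False using e by simp
  qed
  fix \<gamma> :: "real \<Rightarrow> real^'n"
  assume a: "admissible \<gamma>" and box: "\<forall>t\<in>{0..1}. cle (x - e *\<^sub>R 1) (\<gamma> t) \<and> cle (\<gamma> t) y"
  obtain g where g: "C1on 0 1 \<gamma> g" using admissible_C1on[OF a] by blast
  have J: "Jfun f \<gamma> = JJ f \<gamma> g 0 1" using C1on_admissible[OF g] by simp
  define B where "B = M powr (1 / real CARD('n)) * e powr (1 / real CARD('n))"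
  have Wnn: "0 \<le> wfun f x y" by (rule W_nonneg[OF f xy(2)])
  have Bnn: "0 \<le> B" unfolding B_def by simp
  have b0j: "x $ j - e \<le> \<gamma> t $ j" if "t \<in> {0..1}" for j t using box that unfolding cle_def by simp
  define T where "T = {t \<in> {0..1}. \<gamma> t \<in> {z. cle x z}}"
  have cT: "compact T" unfolding T_def by (rule closed_T[OF C1on_cont[OF g] closed_ge])
  show "Jfun f \<gamma> \<le> wfun f x y + M powr (1 / real CARD('n)) * e powr (1 / real CARD('n))"
  proof (cases "T = {}")
    case True
    then have "\<not> cle x (\<gamma> 1)" unfolding T_def by auto
    then obtain j where j: "\<gamma> 1 $ j < x $ j" unfolding cle_def by (auto simp: not_le)
    have X: "\<gamma> 1 $ j - \<gamma> 0 $ j \<le> e" using j b0j[of 0 j] by simp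
    have "JJ f \<gamma> g 0 1 \<le> B" unfolding B_def by (rule JJ_bound_eps[OF f g _ _ _ e X]) auto
    then show ?thesis using Wnn J unfolding B_def by simp
  next
    case False
    obtain t0 where t0: "t0 \<in> T" "\<forall>t\<in>T. t0 \<le> t" using compact_attains_inf[OF cT False] by blast
    have t0r: "0 \<le> t0" "t0 \<le> 1" and t0x: "cle x (\<gamma> t0)" using t0(1) unfolding T_def by auto
    have second: "JJ f \<gamma> g t0 1 \<le> wfun f x y"
    proof (cases "t0 = 1")
      case True then show ?thesis using Wnn by (simp add: JJ_point)
    next
      case False
      have "\<forall>t\<in>{t0..1}. cle x (\<gamma> t) \<and> cle (\<gamma> t) y"
      proof
        fix t assume t: "t \<in> {t0..1}"
        have "cle (\<gamma> t0) (\<gamma> t)" using t t0r by (intro C1on_mono[OF g]) auto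
        then have "cle x (\<gamma> t)" using t0x unfolding cle_def by (meson order_trans)
        moreover have "cle (\<gamma> t) y" using box t t0r by auto
        ultimately show "cle x (\<gamma> t) \<and> cle (\<gamma> t) y" by blast
      qed
      then show ?thesis using False t0r by (intro W_ge_C1[OF f g]) auto
    qed
    have first: "JJ f \<gamma> g 0 t0 \<le> B"
    proof (cases "t0 = 0")
      case True then show ?thesis using Bnn by (simp add: JJ_point)
    next
      case False
      then have t01: "0 < t0" using t0r by simp
      have "\<exists>j. \<gamma> t0 $ j = x $ j"
      proof (rule ccontr)
        assume "\<not> (\<exists>j. \<gamma> t0 $ j = x $ j)"
        then have lt: "\<forall>i. 0 < (\<gamma> t0 - x) $ i" using t0x unfolding cle_def
          by (metis diff_gt_0_iff_gt order_le_neq_trans vector_minus_component)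
        obtain \<delta> where \<delta>: "\<delta> > 0" "\<forall>i. \<delta> \<le> (\<gamma> t0 - x) $ i" using min_pos_components[OF lt] by blast
        obtain \<eta> where \<eta>: "\<eta> > 0" "\<forall>t\<in>{0..1}. \<bar>t - t0\<bar> < \<eta> \<longrightarrow> (\<forall>i. \<bar>\<gamma> t $ i - \<gamma> t0 $ i\<bar> < \<delta>)"
          using cont_components[OF C1on_cont[OF g] _ \<delta>(1), of t0] t0r by auto
        define t where "t = max 0 (t0 - \<eta> / 2)"
        have tr: "t \<in> {0..1}" "\<bar>t - t0\<bar> < \<eta>" "t < t0" unfolding t_def using t0r t01 \<eta>(1) by auto
        have "\<forall>i. x $ i \<le> \<gamma> t $ i"
        proof
          fix i
          have "\<bar>\<gamma> t $ i - \<gamma> t0 $ i\<bar> < \<delta>" using \<eta>(2) tr by blast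
          moreover have "\<delta> \<le> \<gamma> t0 $ i - x $ i" using \<delta>(2) by simp
          ultimately show "x $ i \<le> \<gamma> t $ i" by linarith
        qed
        then have "t \<in> T" using tr unfolding T_def cle_def by auto
        then show False using t0(2) tr(3) by fastforce
      qed
      then obtain j where j: "\<gamma> t0 $ j = x $ j" by blast
      have X: "\<gamma> t0 $ j - \<gamma> 0 $ j \<le> e" using j b0j[of 0 j] by simp
      show ?thesis unfolding B_def by (rule JJ_bound_eps[OF f g _ _ _ e X]) (use t0r in auto)
    qed
    have "JJ f \<gamma> g 0 1 = JJ f \<gamma> g 0 t0 + JJ f \<gamma> g t0 1" by (rule JJ_split[OF f g t0r])
    then show ?thesis using first second J unfolding B_def by simp
  qed
qed


lemma comp_close:
  fixes x x' :: "real^'n"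
  assumes "norm (x - x') \<le> e"
  shows "cle x' (x + e *\<^sub>R 1)" "cle (x - e *\<^sub>R 1) x'"
proof -
  have "\<bar>(x - x') $ i\<bar> \<le> e" for i using component_le_norm_cart[of "x - x'" i] assms by linarith
  then have "\<bar>x $ i - x' $ i\<bar> \<le> e" for i by simp
  then show "cle x' (x + e *\<^sub>R 1)" "cle (x - e *\<^sub>R 1) x'" unfolding cle_def
    by (auto simp: abs_le_iff algebra_simps)
qed

lemma U_close:
  fixes x x' :: "real^'n"
  assumes f: "goodf f M" and e: "0 < e" and n: "norm (x - x') \<le> e"
  shows "\<bar>Ufun f x - Ufun f x'\<bar> \<le> M powr (1 / real CARD('n)) * e powr (1 / real CARD('n))"
proof -
  have n': "norm (x' - x) \<le> e" using n by (simp add: norm_minus_commute)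
  have "Ufun f x' \<le> Ufun f (x + e *\<^sub>R 1)" by (rule U_mono[OF f comp_close(1)[OF n]])
  also have "\<dots> \<le> Ufun f x + M powr (1 / real CARD('n)) * e powr (1 / real CARD('n))" by (rule U_shift[OF f e])
  finally have A: "Ufun f x' \<le> Ufun f x + M powr (1 / real CARD('n)) * e powr (1 / real CARD('n))" .
  have "Ufun f x \<le> Ufun f (x' + e *\<^sub>R 1)" by (rule U_mono[OF f comp_close(1)[OF n']])
  also have "\<dots> \<le> Ufun f x' + M powr (1 / real CARD('n)) * e powr (1 / real CARD('n))" by (rule U_shift[OF f e])
  finally have B: "Ufun f x \<le> Ufun f x' + M powr (1 / real CARD('n)) * e powr (1 / real CARD('n))" .
  show ?thesis using A B by linarith
qed

lemma W_close:
  fixes x x' y :: "real^'n"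
  assumes f: "goodf f M" and e: "0 < e" and n: "norm (x - x') \<le> e"
    and x: "cle x y" "x \<noteq> y" and x': "cle x' y" "x' \<noteq> y"
  shows "\<bar>wfun f x y - wfun f x' y\<bar> \<le> M powr (1 / real CARD('n)) * e powr (1 / real CARD('n))"
proof -
  have n': "norm (x' - x) \<le> e" using n by (simp add: norm_minus_commute)
  have "wfun f x' y \<le> wfun f (x - e *\<^sub>R 1) y" by (rule W_mono[OF f comp_close(2)[OF n] x'])
  also have "\<dots> \<le> wfun f x y + M powr (1 / real CARD('n)) * e powr (1 / real CARD('n))" by (rule W_shift[OF f x e])
  finally have A: "wfun f x' y \<le> wfun f x y + M powr (1 / real CARD('n)) * e powr (1 / real CARD('n))" .
  have "wfun f x y \<le> wfun f (x' - e *\<^sub>R 1) y" by (rule W_mono[OF f comp_close(2)[OF n'] x])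
  also have "\<dots> \<le> wfun f x' y + M powr (1 / real CARD('n)) * e powr (1 / real CARD('n))" by (rule W_shift[OF f x' e])
  finally have B: "wfun f x y \<le> wfun f x' y + M powr (1 / real CARD('n)) * e powr (1 / real CARD('n))" .
  show ?thesis using A B by linarith
qed

lemma G_cont:
  fixes y :: "real^'n"
  assumes f: "goodf f M"
  shows "continuous_on {x. cle x y \<and> x \<noteq> y} (\<lambda>x. Ufun f x + wfun f x y)"
  unfolding continuous_on_iff
proof (intro ballI allI impI)
  fix x and \<epsilon> :: real assume x: "x \<in> {x. cle x y \<and> x \<noteq> y}" and \<epsilon>: "0 < \<epsilon>"
  define H where "H = M powr (1 / real CARD('n))"
  have H0: "0 \<le> H" unfolding H_def by simp
  define a where "a = \<epsilon> / (2 * H + 1)"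
  have a0: "0 < a" unfolding a_def using \<epsilon> H0 by simp
  define e where "e = a powr real CARD('n)"
  have e0: "0 < e" unfolding e_def using a0 by simp
  have ea: "e powr (1 / real CARD('n)) = a" unfolding e_def using a0 by (simp add: powr_powr)
  have small: "2 * (H * a) < \<epsilon>"
  proof -
    have "2 * (H * a) = \<epsilon> * (2 * H) / (2 * H + 1)" unfolding a_def using H0 by (simp add: field_simps)
    also have "\<dots> < \<epsilon>" using \<epsilon> H0 by (simp add: field_simps)
    finally show ?thesis .
  qed
  show "\<exists>\<delta>>0. \<forall>x'\<in>{x. cle x y \<and> x \<noteq> y}. dist x' x < \<delta> \<longrightarrow> dist (Ufun f x' + wfun f x' y) (Ufun f x + wfun f x y) < \<epsilon>"
  proof (intro exI[of _ e] conjI e0 ballI impI)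
    fix x' assume x': "x' \<in> {x. cle x y \<and> x \<noteq> y}" and d: "dist x' x < e"
    have n: "norm (x - x') \<le> e" using d by (simp add: dist_norm norm_minus_commute)
    have "\<bar>Ufun f x - Ufun f x'\<bar> \<le> H * a" using U_close[OF f e0 n] unfolding H_def ea .
    moreover have "\<bar>wfun f x y - wfun f x' y\<bar> \<le> H * a" using W_close[OF f e0 n] x x' unfolding H_def ea by auto
    ultimately show "dist (Ufun f x' + wfun f x' y) (Ufun f x + wfun f x y) < \<epsilon>"
      using small unfolding dist_real_def by linarith
  qed
qed


lemma cover:
  fixes \<gamma> :: "real \<Rightarrow> real^'n" and y :: "real^'n"
  assumes f: "goodf f M" and r: "0 < r" and a: "admissible \<gamma>" and c: "cle (\<gamma> 1) y"
  shows "\<exists>x. dist y x = r \<and> cle x y \<and> x \<noteq> y \<and> Jfun f \<gamma> \<le> Ufun f x + wfun f x y"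
proof -
  obtain g where g: "C1on 0 1 \<gamma> g" using admissible_C1on[OF a] by blast
  have J: "Jfun f \<gamma> = JJ f \<gamma> g 0 1" using C1on_admissible[OF g] by simp
  have mono: "cle (\<gamma> s) (\<gamma> t)" if "0 \<le> s" "s \<le> t" "t \<le> 1" for s t
    using C1on_mono[OF g that] .
  have cy: "cle (\<gamma> t) y" if "t \<in> {0..1}" for t
    using mono[of t 1] that c unfolding cle_def by (auto intro: order_trans)
  consider (A) "r \<le> norm (\<gamma> 1 - y)" | (B) "norm (\<gamma> 1 - y) < r" "norm (\<gamma> 0 - y) \<le> r"
    | (C) "norm (\<gamma> 1 - y) < r" "r < norm (\<gamma> 0 - y)" by linarith
  then show ?thesis
  proof cases
    case A
    define n where "n = norm (\<gamma> 1 - y)"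
    have n: "0 < n" "r \<le> n" using A r unfolding n_def by auto
    define l where "l = r / n"
    have l: "0 < l" "l \<le> 1" unfolding l_def using n r by auto
    define x where "x = y + l *\<^sub>R (\<gamma> 1 - y)"
    have dx: "dist y x = r" unfolding x_def l_def n_def using n r by (simp add: dist_norm n_def)
    have cxy: "cle x y" unfolding x_def cle_def
    proof
      fix i have "\<gamma> 1 $ i - y $ i \<le> 0" using c unfolding cle_def by (simp add: spec[of _ i])
      then show "(y + l *\<^sub>R (\<gamma> 1 - y)) $ i \<le> y $ i" using l by (simp add: mult_nonneg_nonpos)
    qed
    have cgx: "cle (\<gamma> 1) x" unfolding x_def cle_def
    proof
      fix i have "\<gamma> 1 $ i - y $ i \<le> 0" using c unfolding cle_def by (simp add: spec[of _ i])
      then have "(1 - l) * (\<gamma> 1 $ i - y $ i) \<le> 0" using l by (simp add: mult_nonneg_nonpos)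
      then show "\<gamma> 1 $ i \<le> (y + l *\<^sub>R (\<gamma> 1 - y)) $ i" by (simp add: algebra_simps)
    qed
    have xy: "x \<noteq> y" using dx r by auto
    have "Jfun f \<gamma> \<le> Ufun f x" by (rule U_upper[OF f a cgx])
    then show ?thesis using dx cxy xy W_nonneg[OF f xy] by (intro exI[of _ x]) auto
  next
    case B
    define \<phi> where "\<phi> c = norm (\<gamma> 0 - c *\<^sub>R 1 - y)" for c
    have "\<phi> 0 \<le> r" unfolding \<phi>_def using B by simp
    moreover have "r \<le> \<phi> r"
    proof -
      have "\<bar>(\<gamma> 0 - r *\<^sub>R 1 - y) $ undefined\<bar> \<le> \<phi> r" unfolding \<phi>_def by (rule component_le_norm_cart)
      moreover have "\<gamma> 0 $ undefined \<le> y $ undefined" using cy[of 0] unfolding cle_def by simp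
      ultimately show ?thesis using r by simp
    qed
    moreover have "continuous_on {0..r} \<phi>" unfolding \<phi>_def by (intro continuous_intros)
    ultimately obtain c0 where c0: "0 \<le> c0" "c0 \<le> r" "\<phi> c0 = r" using IVT'[of \<phi> 0 r r] r by auto
    define x where "x = \<gamma> 0 - c0 *\<^sub>R 1"
    have dx: "dist y x = r" using c0(3) unfolding \<phi>_def x_def by (simp add: dist_norm norm_minus_commute)
    have xy: "x \<noteq> y" using dx r by auto
    have box: "\<forall>t\<in>{0..1}. cle x (\<gamma> t) \<and> cle (\<gamma> t) y"
    proof
      fix t :: real assume t: "t \<in> {0..1}"
      have "cle (\<gamma> 0) (\<gamma> t)" using mono[of 0 t] t by auto
      have "cle x (\<gamma> t)" unfolding cle_def
      proof
        fix i
        have "\<gamma> 0 $ i \<le> \<gamma> t $ i" using \<open>cle (\<gamma> 0) (\<gamma> t)\<close> unfolding cle_def by blast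
        then show "x $ i \<le> \<gamma> t $ i" unfolding x_def using c0(1) by simp
      qed
      then show "cle x (\<gamma> t) \<and> cle (\<gamma> t) y" using cy t by auto
    qed
    have cxy: "cle x y" using box unfolding cle_def by (meson atLeastAtMost_iff order_trans zero_le_one order_refl)
    have "Jfun f \<gamma> \<le> wfun f x y" by (rule W_upper[OF f a box])
    then show ?thesis using dx cxy xy U_nonneg[OF f, of x] by (intro exI[of _ x]) auto
  next
    case C
    have "continuous_on {0..1} (\<lambda>t. norm (\<gamma> t - y))"
      using C1on_cont[OF g] by (intro continuous_intros)
    then obtain ts where ts: "0 \<le> ts" "ts \<le> 1" "norm (\<gamma> ts - y) = r"
      using IVT2'[of "\<lambda>t. norm (\<gamma> t - y)" 1 r 0] C by auto
    have ts0: "ts \<noteq> 0" "ts \<noteq> 1" using ts C by auto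
    define x where "x = \<gamma> ts"
    have dx: "dist y x = r" using ts unfolding x_def by (simp add: dist_norm norm_minus_commute)
    have xy: "x \<noteq> y" using dx r by auto
    have cxy: "cle x y" unfolding x_def using cy ts by auto
    have U1: "JJ f \<gamma> g 0 ts \<le> Ufun f x"
      using ts ts0 unfolding x_def by (intro U_ge_C1[OF f g]) (auto simp: cle_def)
    have box: "\<forall>t\<in>{ts..1}. cle x (\<gamma> t) \<and> cle (\<gamma> t) y"
      using ts mono cy unfolding x_def by auto
    have W1: "JJ f \<gamma> g ts 1 \<le> wfun f x y"
      using ts ts0 box by (intro W_ge_C1[OF f g]) auto
    have "JJ f \<gamma> g 0 1 = JJ f \<gamma> g 0 ts + JJ f \<gamma> g ts 1" by (rule JJ_split[OF f g ts(1,2)])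
    then show ?thesis using U1 W1 J dx cxy xy by (intro exI[of _ x]) auto
  qed
qed


lemma hvd_scal:
  fixes w :: "real^'n"
  assumes "(\<phi> has_real_derivative \<phi>') (at t)"
  shows "((\<lambda>t. \<phi> t *\<^sub>R w) has_vector_derivative \<phi>' *\<^sub>R w) (at t within S)"
  using has_vector_derivative_scaleR[OF assms has_vector_derivative_const[of w]]
  by (auto intro: has_vector_derivative_at_within)

lemma connector:
  fixes p q v u :: "real^'n"
  assumes v: "\<forall>i. 0 \<le> v $ i" "v \<noteq> 0" and u: "\<forall>i. 0 \<le> u $ i" "u \<noteq> 0" and T0: "0 < T0"
    and E: "\<forall>i. 0 \<le> (q - p - (T0 / 2) *\<^sub>R (u + v)) $ i"
  shows "\<exists>c c'. C1on a1 (a1 + T0) c c' \<and> c a1 = p \<and> c (a1 + T0) = q \<and> c' a1 = v \<and> c' (a1 + T0) = u"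
proof -
  define E where "E = q - p - (T0 / 2) *\<^sub>R (u + v)"
  define \<phi>1 where "\<phi>1 t = t - a1" for t
  define \<phi>2 where "\<phi>2 t = (t - a1)^2 / (2 * T0)" for t
  define \<phi>3 where "\<phi>3 t = 3 * (t - a1)^2 / T0^2 - 2 * (t - a1)^3 / T0^3" for t
  define \<psi>2 where "\<psi>2 t = (t - a1) / T0" for t
  define \<psi>3 where "\<psi>3 t = 6 * (t - a1) / T0^2 - 6 * (t - a1)^2 / T0^3" for t
  define c where "c t = p + \<phi>1 t *\<^sub>R v + \<phi>2 t *\<^sub>R (u - v) + \<phi>3 t *\<^sub>R E" for t
  define c' where "c' t = v + \<psi>2 t *\<^sub>R (u - v) + \<psi>3 t *\<^sub>R E" for t
  have d1: "(\<phi>1 has_real_derivative 1) (at t)" for t unfolding \<phi>1_def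
    by (auto intro!: derivative_eq_intros)
  have d2: "(\<phi>2 has_real_derivative \<psi>2 t) (at t)" for t unfolding \<phi>2_def \<psi>2_def
    by (rule derivative_eq_intros refl | use T0 in \<open>simp add: field_simps\<close>)+
  have d3: "(\<phi>3 has_real_derivative \<psi>3 t) (at t)" for t unfolding \<phi>3_def \<psi>3_def
    by (rule derivative_eq_intros refl | use T0 in \<open>simp add: field_simps power2_eq_square power3_eq_cube\<close>)+
  have der: "(c has_vector_derivative c' t) (at t within S)" for t S
  proof -
    have "((\<lambda>t. p + \<phi>1 t *\<^sub>R v + \<phi>2 t *\<^sub>R (u - v) + \<phi>3 t *\<^sub>R E) has_vector_derivative
        0 + 1 *\<^sub>R v + \<psi>2 t *\<^sub>R (u - v) + \<psi>3 t *\<^sub>R E) (at t within S)"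
      by (intro has_vector_derivative_add has_vector_derivative_const hvd_scal d1 d2 d3)
    then show ?thesis unfolding c_def[abs_def] c'_def by simp
  qed
  have cc': "continuous_on {a1..a1 + T0} c'"
    unfolding c'_def \<psi>2_def \<psi>3_def by (intro continuous_intros) (use T0 in auto)
  have form: "c' t $ i = (1 - (t - a1) / T0) * v $ i + ((t - a1) / T0) * u $ i
      + (6 * (t - a1) * (T0 - (t - a1)) / T0^3) * E $ i" for t i
    unfolding c'_def \<psi>2_def \<psi>3_def using T0
    by (simp add: field_simps power2_eq_square power3_eq_cube)
  have Ei: "0 \<le> E $ i" for i using E unfolding E_def by blast
  have pos: "(\<forall>i. 0 \<le> c' t $ i) \<and> c' t \<noteq> 0" if t: "t \<in> {a1..a1 + T0}" for t
  proof
    have s: "0 \<le> t - a1" "t - a1 \<le> T0" using t by auto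
    have r1: "0 \<le> 1 - (t - a1) / T0" using s T0 by simp
    have r2: "0 \<le> (t - a1) / T0" using s T0 by simp
    have r3: "0 \<le> 6 * (t - a1) * (T0 - (t - a1)) / T0^3" using s T0 by simp
    show "\<forall>i. 0 \<le> c' t $ i" unfolding form using r1 r2 r3 v(1) u(1) Ei
      by (intro allI add_nonneg_nonneg mult_nonneg_nonneg) auto
    show "c' t \<noteq> 0"
    proof (cases "t - a1 < T0")
      case True
      obtain i where vi: "v $ i \<noteq> 0" using v(2) by (auto simp: vec_eq_iff)
      then have "0 < v $ i" using v(1) by (simp add: order_le_neq_trans)
      moreover have "0 < 1 - (t - a1) / T0" using True T0 by simp
      ultimately have "0 < (1 - (t - a1) / T0) * v $ i" by simp
      moreover have "0 \<le> ((t - a1) / T0) * u $ i + (6 * (t - a1) * (T0 - (t - a1)) / T0^3) * E $ i"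
        using r2 r3 u(1) Ei by (intro add_nonneg_nonneg mult_nonneg_nonneg) auto
      ultimately have "0 < c' t $ i" unfolding form by linarith
      then show ?thesis by auto
    next
      case False
      then have "t - a1 = T0" using s by simp
      then have "c' t = u" unfolding c'_def \<psi>2_def \<psi>3_def using T0
        by (simp add: power2_eq_square power3_eq_cube)
      then show ?thesis using u(2) by simp
    qed
  qed
  have C: "C1on a1 (a1 + T0) c c'" unfolding C1on_def using T0 der cc' pos by auto
  have e0: "c a1 = p" unfolding c_def \<phi>1_def \<phi>2_def \<phi>3_def by simp
  have e1: "c (a1 + T0) = q"
  proof -
    have "c (a1 + T0) = p + T0 *\<^sub>R v + (T0 / 2) *\<^sub>R (u - v) + E"
      unfolding c_def \<phi>1_def \<phi>2_def \<phi>3_def using T0 by (simp add: power2_eq_square power3_eq_cube)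
    also have "\<dots> = q" unfolding E_def by (simp add: vec_eq_iff field_simps)
    finally show ?thesis .
  qed
  have e2: "c' a1 = v" unfolding c'_def \<psi>2_def \<psi>3_def by simp
  have e3: "c' (a1 + T0) = u" unfolding c'_def \<psi>2_def \<psi>3_def using T0
    by (simp add: power2_eq_square power3_eq_cube)
  show ?thesis using C e0 e1 e2 e3 by blast
qed


lemma const_zero_deriv:
  fixes \<gamma> g :: "real \<Rightarrow> real^'n"
  assumes c: "C1on a b \<gamma> g" and st: "a \<le> s" "s < t" "t \<le> b" and eq: "\<gamma> s $ i = \<gamma> t $ i"
    and x: "x \<in> {s..t}"
  shows "g x $ i = 0"
proof -
  have xab: "x \<in> {a..b}" using x st by auto
  have D: "(\<gamma> has_vector_derivative g x) (at x within {s..t})"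
    using c xab st unfolding C1on_def by (auto intro: has_vector_derivative_within_subset[where S="{a..b}"])
  have "((\<lambda>t. \<gamma> t $ i) has_derivative (\<lambda>h. (h *\<^sub>R g x) $ i)) (at x within {s..t})"
    using bounded_linear.has_derivative[OF bounded_linear_vec_nth D[unfolded has_vector_derivative_def]] .
  then have D1: "((\<lambda>t. \<gamma> t $ i) has_vector_derivative g x $ i) (at x within {s..t})"
    unfolding has_vector_derivative_def by (simp add: mult.commute)
  have consti: "\<gamma> y $ i = \<gamma> s $ i" if "y \<in> {s..t}" for y
  proof -
    have o: "a \<le> s" "s \<le> y" "y \<le> b" "a \<le> y" "y \<le> t" "t \<le> b" using that st by auto
    have "cle (\<gamma> s) (\<gamma> y)" "cle (\<gamma> y) (\<gamma> t)"
      using C1on_mono[OF c o(1,2,3)] C1on_mono[OF c o(4,5,6)] by auto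
    then have "\<gamma> s $ i \<le> \<gamma> y $ i" "\<gamma> y $ i \<le> \<gamma> t $ i" unfolding cle_def by auto
    then show ?thesis using eq by linarith
  qed
  have D0: "((\<lambda>t. \<gamma> t $ i) has_vector_derivative 0) (at x within {s..t})"
    by (rule has_vector_derivative_weaken[OF has_vector_derivative_const[of "\<gamma> s $ i"] x order_refl])
      (metis consti)
  have "vector_derivative (\<lambda>t. \<gamma> t $ i) (at x within {s..t}) = g x $ i"
    by (rule vector_derivative_within_closed_interval[OF st(2) x D1])
  moreover have "vector_derivative (\<lambda>t. \<gamma> t $ i) (at x within {s..t}) = 0"
    by (rule vector_derivative_within_closed_interval[OF st(2) x D0])
  ultimately show ?thesis by simp
qed

lemma strict_incr_end:
  fixes \<gamma> g :: "real \<Rightarrow> real^'n"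
  assumes c: "C1on a b \<gamma> g" and st: "a \<le> s" "s < t" "t \<le> b" and x: "x = s \<or> x = t" and gx: "0 < g x $ i"
  shows "\<gamma> s $ i < \<gamma> t $ i"
proof -
  have "cle (\<gamma> s) (\<gamma> t)" using st by (intro C1on_mono[OF c]) linarith+
  then have le: "\<gamma> s $ i \<le> \<gamma> t $ i" unfolding cle_def by blast
  show ?thesis
  proof (rule ccontr)
    assume "\<not> \<gamma> s $ i < \<gamma> t $ i"
    then have eqi: "\<gamma> s $ i = \<gamma> t $ i" using le by simp
    have xin: "x \<in> {s..t}" using x st by auto
    have "g x $ i = 0" by (rule const_zero_deriv[OF c st eqi xin])
    then show False using gx by simp
  qed
qed


lemma concat_eps:
  fixes \<gamma>1 g1 \<gamma>2 g2 :: "real \<Rightarrow> real^'n" and x y :: "real^'n"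
  assumes f: "goodf f M" and c1: "C1on 0 1 \<gamma>1 g1" and e1: "cle (\<gamma>1 1) x"
    and c2: "C1on 0 1 \<gamma>2 g2" and box: "\<forall>t\<in>{0..1}. cle x (\<gamma>2 t) \<and> cle (\<gamma>2 t) y" and \<eta>: "0 < \<eta>"
  shows "JJ f \<gamma>1 g1 0 1 + JJ f \<gamma>2 g2 0 1 \<le> Ufun f y + \<eta>"
proof -
  obtain K1 where K1: "K1 \<ge> 0" "\<forall>s t. 0 \<le> s \<longrightarrow> s \<le> t \<longrightarrow> t \<le> 1 \<longrightarrow> JJ f \<gamma>1 g1 s t \<le> K1 * (t - s)"
    using JJ_le_length[OF f c1] by blast
  obtain K2 where K2: "K2 \<ge> 0" "\<forall>s t. 0 \<le> s \<longrightarrow> s \<le> t \<longrightarrow> t \<le> 1 \<longrightarrow> JJ f \<gamma>2 g2 s t \<le> K2 * (t - s)"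
    using JJ_le_length[OF f c2] by blast
  define \<tau> where "\<tau> = min (1/2) (\<eta> / (2 * (K1 + K2 + 1)))"
  have \<tau>0: "0 < \<tau>" "\<tau> \<le> 1/2"
  proof -
    have "0 < \<eta> / (2 * (K1 + K2 + 1))" using \<eta> K1 K2 by simp
    then show "0 < \<tau>" unfolding \<tau>_def by simp
    show "\<tau> \<le> 1/2" unfolding \<tau>_def by (rule min.cobounded1)
  qed
  have \<tau>1: "\<tau> * (2 * (K1 + K2 + 1)) \<le> \<eta>"
  proof -
    have "\<tau> \<le> \<eta> / (2 * (K1 + K2 + 1))" unfolding \<tau>_def by simp
    then show ?thesis using K1 K2 by (simp add: field_simps)
  qed
  have K12: "0 \<le> K1 * \<tau>" "0 \<le> K2 * \<tau>" using K1 K2 \<tau>0 by simp_all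
  have \<tau>2: "2 * \<tau> + 2 * (K1 * \<tau>) + 2 * (K2 * \<tau>) \<le> \<eta>" using \<tau>1 by (simp add: algebra_simps)
  have K1t: "K1 * \<tau> \<le> \<eta> / 2" and K2t: "K2 * \<tau> \<le> \<eta> / 2" using \<tau>2 K12 \<tau>0 by linarith+
  define a1 where "a1 = 1 - \<tau>"
  have a1: "0 < a1" "a1 < 1" "\<tau> < 1" unfolding a1_def using \<tau>0 by auto
  have s1: "JJ f \<gamma>1 g1 0 1 = JJ f \<gamma>1 g1 0 a1 + JJ f \<gamma>1 g1 a1 1" by (rule JJ_split[OF f c1]) (use a1 in auto)
  have s1b: "JJ f \<gamma>1 g1 a1 1 \<le> \<eta> / 2"
  proof -
    have "JJ f \<gamma>1 g1 a1 1 \<le> K1 * (1 - a1)" using K1(2) a1 by simp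
    then show ?thesis using K1t unfolding a1_def by simp
  qed
  have s2: "JJ f \<gamma>2 g2 0 1 = JJ f \<gamma>2 g2 0 \<tau> + JJ f \<gamma>2 g2 \<tau> 1" by (rule JJ_split[OF f c2]) (use \<tau>0 a1 in auto)
  have s2b: "JJ f \<gamma>2 g2 0 \<tau> \<le> \<eta> / 2"
  proof -
    have "JJ f \<gamma>2 g2 0 \<tau> \<le> K2 * (\<tau> - 0)" using K2(2) \<tau>0 a1 by (meson less_eq_real_def order_refl)
    then show ?thesis using K2t by simp
  qed
  define p where "p = \<gamma>1 a1"
  define v where "v = g1 a1"
  define q where "q = \<gamma>2 \<tau>"
  define u where "u = g2 \<tau>"
  have v: "\<forall>i. 0 \<le> v $ i" "v \<noteq> 0" using c1 a1 unfolding C1on_def v_def by auto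
  have u: "\<forall>i. 0 \<le> u $ i" "u \<noteq> 0" using c2 \<tau>0 a1 unfolding C1on_def u_def by auto
  define D where "D = q - p"
  have Dprop: "0 \<le> D $ i \<and> (0 < u $ i + v $ i \<longrightarrow> 0 < D $ i)" for i
  proof -
    have "cle (\<gamma>1 a1) (\<gamma>1 1)" using a1 by (intro C1on_mono[OF c1]) auto
    then have A1: "\<gamma>1 a1 $ i \<le> \<gamma>1 1 $ i" unfolding cle_def by blast
    have "cle (\<gamma>2 0) (\<gamma>2 \<tau>)" using a1 \<tau>0 by (intro C1on_mono[OF c2]) auto
    then have A2: "\<gamma>2 0 $ i \<le> \<gamma>2 \<tau> $ i" unfolding cle_def by blast
    have A3: "\<gamma>1 1 $ i \<le> x $ i" using e1 unfolding cle_def by blast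
    have A4: "x $ i \<le> \<gamma>2 0 $ i" using box unfolding cle_def by auto
    have Di: "D $ i = \<gamma>2 \<tau> $ i - \<gamma>1 a1 $ i" unfolding D_def p_def q_def by simp
    have P1: "\<gamma>1 a1 $ i < \<gamma>1 1 $ i" if h: "0 < v $ i"
    proof (rule strict_incr_end[OF c1 _ a1(2) order_refl])
      show "0 \<le> a1" using a1 by simp
      show "a1 = a1 \<or> a1 = 1" by simp
      show "0 < g1 a1 $ i" using h unfolding v_def .
    qed
    have P2: "\<gamma>2 0 $ i < \<gamma>2 \<tau> $ i" if h: "0 < u $ i"
    proof (rule strict_incr_end[OF c2 order_refl \<tau>0(1)])
      show "\<tau> \<le> 1" using a1 by simp
      show "\<tau> = 0 \<or> \<tau> = \<tau>" by simp
      show "0 < g2 \<tau> $ i" using h unfolding u_def .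
    qed
    show ?thesis
    proof
      show "0 \<le> D $ i" using A1 A2 A3 A4 Di by linarith
      show "0 < u $ i + v $ i \<longrightarrow> 0 < D $ i"
      proof
        assume "0 < u $ i + v $ i"
        then have "0 < u $ i \<or> 0 < v $ i" by linarith
        then show "0 < D $ i" using P1 P2 A1 A2 A3 A4 Di by linarith
      qed
    qed
  qed
  define \<rho> where "\<rho> i = (if 0 < u $ i + v $ i then D $ i / (u $ i + v $ i) else 1)" for i
  define T0 where "T0 = Min (range \<rho>)"
  have \<rho>0: "0 < \<rho> i" for i unfolding \<rho>_def using Dprop[of i] by auto
  have T0: "0 < T0" unfolding T0_def using \<rho>0 by (subst Min_gr_iff) auto
  have T0le: "T0 \<le> \<rho> i" for i unfolding T0_def by (auto intro: Min_le)
  have Econd: "\<forall>i. 0 \<le> (q - p - (T0 / 2) *\<^sub>R (u + v)) $ i"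
  proof
    fix i
    have uv0: "0 \<le> u $ i + v $ i" using u v by (simp add: add_nonneg_nonneg)
    have "T0 * (u $ i + v $ i) \<le> D $ i"
    proof (cases "0 < u $ i + v $ i")
      case True
      then have "T0 \<le> D $ i / (u $ i + v $ i)" using T0le[of i] unfolding \<rho>_def by simp
      then show ?thesis using True by (simp add: pos_le_divide_eq)
    next
      case False
      then have "u $ i + v $ i = 0" using uv0 by simp
      then show ?thesis using Dprop[of i] by simp
    qed
    moreover have "(T0 / 2) * (u $ i + v $ i) \<le> T0 * (u $ i + v $ i)" using T0 uv0 by (simp add: mult_right_mono)
    ultimately show "0 \<le> (q - p - (T0 / 2) *\<^sub>R (u + v)) $ i" unfolding D_def by simp
  qed
  obtain cn cn' where cn: "C1on a1 (a1 + T0) cn cn'" "cn a1 = p" "cn (a1 + T0) = q" "cn' a1 = v" "cn' (a1 + T0) = u"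
    using connector[OF v u T0 Econd, of a1] by blast
  define a2 where "a2 = a1 + T0"
  have a2: "a1 < a2" unfolding a2_def using T0 by simp
  have c1s: "C1on 0 a1 \<gamma>1 g1" by (rule C1on_sub[OF c1]) (use a1 in auto)
  define G1 where "G1 t = (if t \<le> a1 then \<gamma>1 t else cn t)" for t
  define G1' where "G1' t = (if t \<le> a1 then g1 t else cn' t)" for t
  have cG1: "C1on 0 a2 G1 G1'" unfolding G1_def[abs_def] G1'_def[abs_def] a2_def
    by (rule C1on_glue(1)[OF c1s cn(1)]) (use cn in \<open>simp_all add: p_def v_def\<close>)
  have JG1: "JJ f G1 G1' 0 a2 = JJ f \<gamma>1 g1 0 a1 + JJ f cn cn' a1 a2" unfolding G1_def[abs_def] G1'_def[abs_def] a2_def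
    by (rule C1on_glue(2)[OF c1s cn(1)]) (use cn f in \<open>simp_all add: p_def v_def\<close>)
  have c2s: "C1on \<tau> 1 \<gamma>2 g2" by (rule C1on_sub[OF c2]) (use \<tau>0 a1 in auto)
  define k where "k = \<tau> - a2"
  define a3 where "a3 = 1 - k"
  define \<gamma>3 where "\<gamma>3 s = \<gamma>2 (1 * s + k)" for s
  define g3 where "g3 s = 1 *\<^sub>R g2 (1 * s + k)" for s
  have R: "C1on ((\<tau> - k) / 1) ((1 - k) / 1) \<gamma>3 g3 \<and> JJ f \<gamma>3 g3 ((\<tau> - k) / 1) ((1 - k) / 1) = JJ f \<gamma>2 g2 \<tau> 1"
    unfolding \<gamma>3_def[abs_def] g3_def[abs_def] by (rule C1on_reparam[OF c2s]) simp
  have tk: "(\<tau> - k) / 1 = a2" "(1 - k) / 1 = a3" unfolding k_def a3_def by simp_all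
  have c3: "C1on a2 a3 \<gamma>3 g3" and J3: "JJ f \<gamma>3 g3 a2 a3 = JJ f \<gamma>2 g2 \<tau> 1" using R unfolding tk by auto
  have G1a2: "G1 a2 = q" "G1' a2 = u" unfolding G1_def G1'_def using a2 cn(3,5) unfolding a2_def by auto
  have g3a2: "\<gamma>3 a2 = q" "g3 a2 = u" unfolding \<gamma>3_def g3_def k_def q_def u_def by simp_all
  define G2 where "G2 t = (if t \<le> a2 then G1 t else \<gamma>3 t)" for t
  define G2' where "G2' t = (if t \<le> a2 then G1' t else g3 t)" for t
  have cG2: "C1on 0 a3 G2 G2'" unfolding G2_def[abs_def] G2'_def[abs_def]
    by (rule C1on_glue(1)[OF cG1 c3]) (use G1a2 g3a2 in simp_all)
  have JG2: "JJ f G2 G2' 0 a3 = JJ f G1 G1' 0 a2 + JJ f \<gamma>3 g3 a2 a3" unfolding G2_def[abs_def] G2'_def[abs_def]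
    by (rule C1on_glue(2)[OF cG1 c3]) (use G1a2 g3a2 f in simp_all)
  have a23: "a2 < a3" and a30: "0 < a3" using c3 a2 a1 unfolding C1on_def by auto
  have endp: "G2 a3 = \<gamma>2 1" unfolding G2_def \<gamma>3_def a3_def using a23 unfolding a3_def by simp
  have "cle (G2 a3) y" unfolding endp using box by auto
  then have U: "JJ f G2 G2' 0 a3 \<le> Ufun f y" by (rule U_ge_C1[OF f cG2 a30 order_refl])
  have cn0: "0 \<le> JJ f cn cn' a1 a2" by (rule JJ_nonneg)
  show ?thesis using s1 s1b s2 s2b JG1 J3 JG2 U cn0 by linarith
qed

lemma concat:
  fixes x y :: "real^'n"
  assumes f: "goodf f M" and xy: "cle x y" "x \<noteq> y"
  shows "Ufun f x + wfun f x y \<le> Ufun f y"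
proof -
  have key: "Jfun f \<gamma>1 + Jfun f \<gamma>2 \<le> Ufun f y"
    if a1: "admissible \<gamma>1" "cle (\<gamma>1 1) x" and a2: "admissible \<gamma>2" "\<forall>t\<in>{0..1}. cle x (\<gamma>2 t) \<and> cle (\<gamma>2 t) y"
    for \<gamma>1 \<gamma>2 :: "real \<Rightarrow> real^'n"
  proof -
    obtain g1 where g1: "C1on 0 1 \<gamma>1 g1" using admissible_C1on[OF a1(1)] by blast
    obtain g2 where g2: "C1on 0 1 \<gamma>2 g2" using admissible_C1on[OF a2(1)] by blast
    have J1: "Jfun f \<gamma>1 = JJ f \<gamma>1 g1 0 1" using C1on_admissible[OF g1] by blast
    have J2: "Jfun f \<gamma>2 = JJ f \<gamma>2 g2 0 1" using C1on_admissible[OF g2] by blast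
    show ?thesis
    proof (rule field_le_epsilon)
      fix e :: real assume "0 < e"
      from concat_eps[OF f g1 a1(2) g2 a2(2) this]
      show "Jfun f \<gamma>1 + Jfun f \<gamma>2 \<le> Ufun f y + e" unfolding J1 J2 .
    qed
  qed
  have "wfun f x y \<le> Ufun f y - Ufun f x"
  proof (rule W_least[OF xy])
    fix \<gamma>2 assume a2: "admissible \<gamma>2" "\<forall>t\<in>{0..1}. cle x (\<gamma>2 t) \<and> cle (\<gamma>2 t) y"
    have "Ufun f x \<le> Ufun f y - Jfun f \<gamma>2"
    proof (rule U_least)
      fix \<gamma>1 assume "admissible \<gamma>1" "cle (\<gamma>1 1) x"
      from key[OF this a2] show "Jfun f \<gamma>1 \<le> Ufun f y - Jfun f \<gamma>2" by simp
    qed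
    then show "Jfun f \<gamma>2 \<le> Ufun f y - Ufun f x" by simp
  qed
  then show ?thesis by simp
qed


theorem lemma2p3:
  fixes f :: "real^'n \<Rightarrow> real" and r :: real and y :: "real^'n"
  assumes dim: "CARD('n) \<ge> 2"
    and nonneg: "\<forall>x. 0 \<le> f x"
    and bdd: "bounded (range f)"
    and meas: "f \<in> borel_measurable borel"
    and supp: "closure {x. f x \<noteq> 0} \<subseteq> {x. \<forall>i. 0 \<le> x $ i \<and> x $ i \<le> 1}"
    and r: "r > 0"
  shows "(\<exists>x\<in>sphere y r. cle x y \<and> x \<noteq> y \<and> Ufun f y = Ufun f x + wfun f x y)
       \<and> (\<forall>x\<in>sphere y r. cle x y \<and> x \<noteq> y \<longrightarrow> Ufun f x + wfun f x y \<le> Ufun f y)"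
proof -
  obtain M where M: "\<forall>x. \<bar>f x\<bar> \<le> M" using bdd unfolding bounded_real by blast
  have f1: "\<forall>x. 0 \<le> f x \<and> f x \<le> M"
  proof
    fix x
    have "\<bar>f x\<bar> \<le> M" using M by blast
    then show "0 \<le> f x \<and> f x \<le> M" using nonneg by (simp add: abs_le_iff)
  qed
  have f3: "\<forall>x. f x \<noteq> 0 \<longrightarrow> (\<forall>i. 0 \<le> x $ i \<and> x $ i \<le> 1)"
  proof (rule allI, rule impI)
    fix x assume "f x \<noteq> 0"
    then have "x \<in> {x. f x \<noteq> 0}" by simp
    then have "x \<in> closure {x. f x \<noteq> 0}" using closure_subset by (rule subsetD[rotated])
    then have "x \<in> {x. \<forall>i. 0 \<le> x $ i \<and> x $ i \<le> 1}" using supp by (rule subsetD[rotated])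
    then show "\<forall>i. 0 \<le> x $ i \<and> x $ i \<le> 1" by simp
  qed
  have f: "goodf f M" unfolding goodf_def using f1 meas f3 by (intro conjI)
  define K where "K = sphere y r \<inter> {x. cle x y}"
  define G where "G x = Ufun f x + wfun f x y" for x
  have cK: "compact K" unfolding K_def by (rule compact_Int_closed[OF compact_sphere closed_le])
  have Ksub: "K \<subseteq> {x. cle x y \<and> x \<noteq> y}" unfolding K_def using r by auto
  have Kne: "K \<noteq> {}"
  proof -
    define x0 where "x0 = y - r *\<^sub>R axis undefined (1::real)"
    have "dist y x0 = r" unfolding x0_def using r by (simp add: dist_norm)
    moreover have "cle x0 y" unfolding x0_def cle_def using r by (simp add: axis_def)
    ultimately show ?thesis unfolding K_def by auto
  qed
  have cG: "continuous_on K G" unfolding G_def by (rule continuous_on_subset[OF G_cont[OF f] Ksub])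
  obtain xm where xm: "xm \<in> K" "\<forall>x\<in>K. G x \<le> G xm" using continuous_attains_sup[OF cK Kne cG] by blast
  have xmp: "xm \<in> sphere y r" "cle xm y" "xm \<noteq> y" using xm(1) Ksub unfolding K_def by auto
  have le1: "Ufun f y \<le> G xm"
  proof (rule U_least)
    fix \<gamma> :: "real \<Rightarrow> real^'n" assume "admissible \<gamma>" "cle (\<gamma> 1) y"
    then obtain x where x: "dist y x = r" "cle x y" "x \<noteq> y" "Jfun f \<gamma> \<le> Ufun f x + wfun f x y"
      using cover[OF f r] by blast
    have "x \<in> K" unfolding K_def using x by auto
    then show "Jfun f \<gamma> \<le> G xm" using x(4) xm(2) unfolding G_def by fastforce
  qed
  have le2: "G xm \<le> Ufun f y" unfolding G_def by (rule concat[OF f xmp(2,3)])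
  show ?thesis
  proof
    show "\<exists>x\<in>sphere y r. cle x y \<and> x \<noteq> y \<and> Ufun f y = Ufun f x + wfun f x y"
      using xmp le1 le2 unfolding G_def by (intro bexI[of _ xm]) auto
    show "\<forall>x\<in>sphere y r. cle x y \<and> x \<noteq> y \<longrightarrow> Ufun f x + wfun f x y \<le> Ufun f y"
      using concat[OF f] by blast
  qed
qed

end
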